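(* Let $\mathbb{K}$ be an algebraically closed field of characteristic zero, let $Y$ be an affine factorial variety over $\mathbb{K}$, and let $f\in\mathbb{K}[Y]$ be non-constant with $f=p_1^{a_1}\cdots p_s^{a_s}$, where $p_1,\dots,p_s$ are pairwise non-associated prime elements of $\mathbb{K}[Y]$ and $a_i\in\mathbb{Z}_{>0}$. Let $X=\{uv=f\}\subseteq\mathbb{A}^2_{u,v}\times Y$. Then the divisor class group satisfies $\operatorname{Cl}(X)\cong\mathbb{Z}^s/\langle\omega\rangle$, where $\omega=(a_1,\dots,a_s)$. *)

theory Defs
  imports "HOL-Algebra.Coset" "HOL-Computational_Algebra.Polynomial"
    "HOL-Computational_Algebra.Factorial_Ring"
begin

definition alg_closed_field :: "('k::field) itself \<Rightarrow> bool" where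
  "alg_closed_field _ \<longleftrightarrow> (\<forall>p :: 'k poly. degree p \<ge> 1 \<longrightarrow> (\<exists>x. poly p x = 0))"

definition unital_ring_hom :: "('a::ring_1 \<Rightarrow> 'b::ring_1) \<Rightarrow> bool" where
  "unital_ring_hom \<phi> \<longleftrightarrow> \<phi> 1 = 1 \<and> (\<forall>x y. \<phi> (x + y) = \<phi> x + \<phi> y) \<and>
     (\<forall>x y. \<phi> (x * y) = \<phi> x * \<phi> y)"

inductive_set alg_span :: "('k \<Rightarrow> 'r::ring_1) \<Rightarrow> 'r set \<Rightarrow> 'r set"
  for \<phi> S where
  scalar: "\<phi> c \<in> alg_span \<phi> S"
| gen: "x \<in> S \<Longrightarrow> x \<in> alg_span \<phi> S"
| add: "x \<in> alg_span \<phi> S \<Longrightarrow> y \<in> alg_span \<phi> S \<Longrightarrow> x + y \<in> alg_span \<phi> S"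
| mult: "x \<in> alg_span \<phi> S \<Longrightarrow> y \<in> alg_span \<phi> S \<Longrightarrow> x * y \<in> alg_span \<phi> S"

definition finitely_generated_algebra :: "('k::field \<Rightarrow> 'r::ring_1) \<Rightarrow> bool" where
  "finitely_generated_algebra \<phi> \<longleftrightarrow>
     unital_ring_hom \<phi> \<and> (\<exists>S. finite S \<and> alg_span \<phi> S = UNIV)"

definition prime_element :: "'r::comm_ring_1 \<Rightarrow> bool" where
  "prime_element p \<longleftrightarrow> p \<noteq> 0 \<and> \<not> p dvd 1 \<and> (\<forall>x y. p dvd x * y \<longrightarrow> p dvd x \<or> p dvd y)"

definition factorial_domain :: "('r::idom) itself \<Rightarrow> bool" where
  "factorial_domain _ \<longleftrightarrow> (\<forall>x :: 'r. x \<noteq> 0 \<and> \<not> x dvd 1 \<longrightarrow>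
      (\<exists>ps. (\<forall>p\<in>set ps. prime_element p) \<and> x = prod_list ps))"

definition tc_ideal :: "('b::comm_ring_1) set \<Rightarrow> bool" where
  "tc_ideal J \<longleftrightarrow> 0 \<in> J \<and> (\<forall>x\<in>J. \<forall>y\<in>J. x + y \<in> J) \<and> (\<forall>x\<in>J. \<forall>r. r * x \<in> J)"

definition tc_prime_ideal :: "('b::comm_ring_1) set \<Rightarrow> bool" where
  "tc_prime_ideal P \<longleftrightarrow> tc_ideal P \<and> P \<noteq> UNIV \<and> (\<forall>x y. x * y \<in> P \<longrightarrow> x \<in> P \<or> y \<in> P)"

definition ideal_gen :: "('b::comm_ring_1) set \<Rightarrow> 'b set" where
  "ideal_gen S = \<Inter> {J. tc_ideal J \<and> S \<subseteq> J}"

fun ideal_pow :: "('b::comm_ring_1) set \<Rightarrow> nat \<Rightarrow> 'b set" where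
  "ideal_pow P 0 = UNIV"
| "ideal_pow P (Suc n) = ideal_gen {x * y | x y. x \<in> P \<and> y \<in> ideal_pow P n}"

text \<open>Throughout, the coordinate ring of X is A = B/I with I a prime ideal of B.
  Ideals of A correspond to ideals of B containing I. A height-one prime of A
  corresponds to a prime P of B with I strictly contained in P and no prime strictly between.\<close>

definition height_one_primes_mod :: "('b::comm_ring_1) set \<Rightarrow> 'b set set" where
  "height_one_primes_mod I = {P. tc_prime_ideal P \<and> I \<subset> P \<and>
      \<not> (\<exists>Q. tc_prime_ideal Q \<and> I \<subset> Q \<and> Q \<subset> P)}"

text \<open>Valuation of the class of g in A along the prime divisor P/I:
  the largest n with g in the n-th symbolic power of P/I, i.e. g in (P/I)^n A_{P/I}.\<close>
definition valuation_mod :: "('b::comm_ring_1) set \<Rightarrow> 'b set \<Rightarrow> 'b \<Rightarrow> int" where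
  "valuation_mod I P g = int (GREATEST n. \<exists>s. s \<notin> P \<and> s * g \<in> {x + y | x y. x \<in> ideal_pow P n \<and> y \<in> I})"

definition div_mod :: "('b::comm_ring_1) set \<Rightarrow> 'b \<Rightarrow> ('b set \<Rightarrow> int)" where
  "div_mod I g = (\<lambda>P. if P \<in> height_one_primes_mod I then valuation_mod I P g else 0)"

definition weil_divisors_mod :: "('b::comm_ring_1) set \<Rightarrow> ('b set \<Rightarrow> int) monoid" where
  "weil_divisors_mod I = \<lparr>carrier = {D. finite {P. D P \<noteq> 0} \<and> {P. D P \<noteq> 0} \<subseteq> height_one_primes_mod I},
     monoid.mult = (\<lambda>D E P. D P + E P), one = (\<lambda>P. 0)\<rparr>"

text \<open>Principal divisors div(a/b) = div(a) - div(b) for nonzero a, b in A.\<close>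
definition principal_divisors_mod :: "('b::comm_ring_1) set \<Rightarrow> ('b set \<Rightarrow> int) set" where
  "principal_divisors_mod I = {(\<lambda>P. div_mod I a P - div_mod I b P) | a b. a \<notin> I \<and> b \<notin> I}"

definition class_group_mod :: "('b::comm_ring_1) set \<Rightarrow> ('b set \<Rightarrow> int) set monoid" where
  "class_group_mod I = weil_divisors_mod I Mod principal_divisors_mod I"

text \<open>K[Y][u,v] is represented as ('r poly) poly: the inner variable is u, the outer is v.
  The element uv - f is [:[:-f:], [:0,1:]:] (coefficient of v^0 is -f, of v^1 is u).\<close>
definition uv_minus :: "'r::comm_ring_1 \<Rightarrow> 'r poly poly" where
  "uv_minus f = [:[:-f:], [:0, 1:]:]"

definition X_ideal :: "'r::comm_ring_1 \<Rightarrow> 'r poly poly set" where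
  "X_ideal f = ideal_gen {uv_minus f}"

definition Zpow :: "nat \<Rightarrow> (nat \<Rightarrow> int) monoid" where
  "Zpow s = \<lparr>carrier = {x. \<forall>i\<ge>s. x i = 0}, monoid.mult = (\<lambda>x y i. x i + y i), one = (\<lambda>i. 0)\<rparr>"

definition cyclic_sub :: "nat \<Rightarrow> (nat \<Rightarrow> int) \<Rightarrow> (nat \<Rightarrow> int) set" where
  "cyclic_sub s w = {(\<lambda>i. if i < s then k * w i else 0) | k. True}"

end

theory Submission
  imports Defs "HOL-Computational_Algebra.Fraction_Field" "HOL-Computational_Algebra.Field_as_Ring"
    "HOL-Computational_Algebra.Polynomial_Factorial"
begin
instantiation fract :: (idom)
  "{unique_euclidean_ring, normalization_euclidean_semiring, normalization_semidom_multiplicative}"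
begin
definition [simp]: "normalize_fract = (normalize_field :: 'a fract \<Rightarrow> _)"
definition [simp]: "unit_factor_fract = (unit_factor_field :: 'a fract \<Rightarrow> _)"
definition [simp]: "modulo_fract = (mod_field :: 'a fract \<Rightarrow> _)"
definition [simp]: "euclidean_size_fract = (euclidean_size_field :: 'a fract \<Rightarrow> _)"
definition [simp]: "division_segment (x :: 'a fract) = 1"
instance
  by standard
    (simp_all add: dvd_field_iff field_split_simps split: if_splits)
end
instantiation fract :: (idom) euclidean_ring_gcd
begin
definition gcd_fract :: "'a fract \<Rightarrow> 'a fract \<Rightarrow> 'a fract" where
  "gcd_fract = Euclidean_Algorithm.gcd"
definition lcm_fract :: "'a fract \<Rightarrow> 'a fract \<Rightarrow> 'a fract" where
  "lcm_fract = Euclidean_Algorithm.lcm"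
definition Gcd_fract :: "'a fract set \<Rightarrow> 'a fract" where
 "Gcd_fract = Euclidean_Algorithm.Gcd"
definition Lcm_fract :: "'a fract set \<Rightarrow> 'a fract" where
 "Lcm_fract = Euclidean_Algorithm.Lcm"
instance by standard (simp_all add: gcd_fract_def lcm_fract_def Gcd_fract_def Lcm_fract_def)
end
instance fract :: (idom) field_gcd ..



lemma tc_idealD:
  assumes "tc_ideal J"
  shows "0 \<in> J" "x \<in> J \<Longrightarrow> y \<in> J \<Longrightarrow> x + y \<in> J" "x \<in> J \<Longrightarrow> r * x \<in> J"
    "x \<in> J \<Longrightarrow> x * r \<in> J" "x \<in> J \<Longrightarrow> - x \<in> J" "x \<in> J \<Longrightarrow> y \<in> J \<Longrightarrow> x - y \<in> J"
proof -
  show "0 \<in> J" using assms unfolding tc_ideal_def by blast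
  show "x \<in> J \<Longrightarrow> y \<in> J \<Longrightarrow> x + y \<in> J" using assms unfolding tc_ideal_def by blast
  have rx: "\<And>x r. x \<in> J \<Longrightarrow> r * x \<in> J" using assms unfolding tc_ideal_def by blast
  show "x \<in> J \<Longrightarrow> r * x \<in> J" using rx by blast
  show "x \<in> J \<Longrightarrow> x * r \<in> J" using rx[of x r] by (simp add: mult.commute)
  have neg: "\<And>x. x \<in> J \<Longrightarrow> - x \<in> J" using rx[of _ "-1"] by simp
  show "x \<in> J \<Longrightarrow> - x \<in> J" using neg by blast
  show "x \<in> J \<Longrightarrow> y \<in> J \<Longrightarrow> x - y \<in> J"
    using neg[of y] assms unfolding tc_ideal_def by (metis diff_conv_add_uminus rx mult_minus1)
qed

lemma tc_ideal_UNIV: "tc_ideal UNIV" by (simp add: tc_ideal_def)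

lemma ideal_gen_ideal: "tc_ideal (ideal_gen S)"
  unfolding ideal_gen_def tc_ideal_def by auto

lemma ideal_gen_sub: "S \<subseteq> ideal_gen S"
  unfolding ideal_gen_def by auto

lemma ideal_gen_least: "tc_ideal J \<Longrightarrow> S \<subseteq> J \<Longrightarrow> ideal_gen S \<subseteq> J"
  unfolding ideal_gen_def by auto

lemma ideal_gen_single: "ideal_gen {a} = {a * h | h. True}"
proof
  have "tc_ideal {a * h | h. True}"
    unfolding tc_ideal_def
    by (auto, metis mult_zero_right, metis distrib_left, metis mult.left_commute)
  moreover have "{a} \<subseteq> {a * h | h. True}" by (auto intro: exI[of _ 1])
  ultimately show "ideal_gen {a} \<subseteq> {a * h | h. True}" by (rule ideal_gen_least)
next
  show "{a * h | h. True} \<subseteq> ideal_gen {a}"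
    using ideal_gen_sub[of "{a}"] tc_idealD(4)[OF ideal_gen_ideal] by blast
qed

lemma ideal_pow_ideal: "tc_ideal (ideal_pow P n)"
  by (cases n) (auto simp: tc_ideal_UNIV ideal_gen_ideal)

lemma pow_in_ideal_pow: "t \<in> P \<Longrightarrow> t ^ n \<in> ideal_pow P n"
proof (induction n)
  case 0 then show ?case by simp
next
  case (Suc n)
  then show ?case using ideal_gen_sub by fastforce
qed

lemma tc_prime_idealD:
  assumes "tc_prime_ideal P"
  shows "tc_ideal P" "P \<noteq> UNIV" "x * y \<in> P \<Longrightarrow> x \<in> P \<or> y \<in> P" "1 \<notin> P"
    "x \<notin> P \<Longrightarrow> y \<notin> P \<Longrightarrow> x * y \<notin> P"
proof -
  show "tc_ideal P" "P \<noteq> UNIV" "x * y \<in> P \<Longrightarrow> x \<in> P \<or> y \<in> P" "x \<notin> P \<Longrightarrow> y \<notin> P \<Longrightarrow> x * y \<notin> P"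
    using assms unfolding tc_prime_ideal_def by auto
  show "1 \<notin> P"
  proof
    assume "1 \<in> P"
    then have "\<And>r. r * 1 \<in> P" using assms unfolding tc_prime_ideal_def tc_ideal_def by blast
    then show False using assms unfolding tc_prime_ideal_def by auto
  qed
qed

lemma prime_ideal_pow_notin:
  assumes "tc_prime_ideal P" "x \<notin> P" shows "x ^ n \<notin> P"
proof (induction n)
  case 0 then show ?case using tc_prime_idealD(4)[OF assms(1)] by simp
next
  case (Suc n) then show ?case using tc_prime_idealD(5)[OF assms(1) assms(2)] by simp
qed

section \<open>Local powers and valuations\<close>

definition locally_pow :: "'b::comm_ring_1 set \<Rightarrow> 'b set \<Rightarrow> 'b \<Rightarrow> 'b \<Rightarrow> nat \<Rightarrow> bool" where
  "locally_pow I P t x n \<longleftrightarrow> (\<exists>s s'. s \<notin> P \<and> s' \<notin> P \<and> s * x - s' * t ^ n \<in> I)"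

definition good :: "'b::comm_ring_1 set \<Rightarrow> 'b set \<Rightarrow> 'b \<Rightarrow> bool" where
  "good I P t \<longleftrightarrow> tc_prime_ideal P \<and> tc_prime_ideal I \<and> I \<subseteq> P \<and> I \<noteq> P \<and> t \<in> P \<and>
     (\<forall>x. x \<notin> I \<longrightarrow> (\<exists>n. locally_pow I P t x n))"

lemma locally_pow_mult:
  assumes "tc_ideal I" "tc_prime_ideal P"
    and "locally_pow I P t x n" "locally_pow I P t y m"
  shows "locally_pow I P t (x * y) (n + m)"
proof -
  obtain s1 s1' where 1: "s1 \<notin> P" "s1' \<notin> P" "s1 * x - s1' * t ^ n \<in> I"
    using assms(3) unfolding locally_pow_def by blast
  obtain s2 s2' where 2: "s2 \<notin> P" "s2' \<notin> P" "s2 * y - s2' * t ^ m \<in> I"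
    using assms(4) unfolding locally_pow_def by blast
  have "(s1 * s2) * (x * y) - (s1' * s2') * t ^ (n + m) =
     (s2 * y) * (s1 * x - s1' * t ^ n) + (s1' * t ^ n) * (s2 * y - s2' * t ^ m)"
    by (simp add: algebra_simps power_add)
  also have "\<dots> \<in> I" using 1 2 tc_idealD[OF assms(1)] by simp
  finally show ?thesis unfolding locally_pow_def
    using 1 2 tc_prime_idealD(5)[OF assms(2)] by blast
qed

lemma locally_pow_zero: "tc_ideal I \<Longrightarrow> x \<notin> P \<Longrightarrow> 1 \<notin> P \<Longrightarrow> locally_pow I P t x 0"
  unfolding locally_pow_def by (rule exI[of _ 1], rule exI[of _ x]) (auto simp: tc_idealD)

lemma locally_pow_cong:
  assumes "tc_ideal I" "locally_pow I P t x n" "x - x' \<in> I"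
  shows "locally_pow I P t x' n"
proof -
  obtain s s' where 1: "s \<notin> P" "s' \<notin> P" "s * x - s' * t ^ n \<in> I"
    using assms(2) unfolding locally_pow_def by blast
  have "s * x' - s' * t ^ n = (s * x - s' * t ^ n) - s * (x - x')" by (simp add: algebra_simps)
  also have "\<dots> \<in> I" using 1 assms tc_idealD[OF assms(1)] by simp
  finally show ?thesis using 1 unfolding locally_pow_def by blast
qed

lemma good_t_notin:
  assumes "good I P t" shows "t \<notin> I"
proof
  assume tI: "t \<in> I"
  from assms have PI: "tc_prime_ideal P" "tc_prime_ideal I" "I \<subseteq> P" "I \<noteq> P"
    unfolding good_def by auto
  then obtain x where x: "x \<in> P" "x \<notin> I" by blast
  then obtain n s s' where 1: "s \<notin> P" "s' \<notin> P" "s * x - s' * t ^ n \<in> I"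
    using assms unfolding good_def locally_pow_def by blast
  have iI: "tc_ideal I" using PI tc_prime_idealD by blast
  have iP: "tc_ideal P" using PI tc_prime_idealD by blast
  show False
  proof (cases n)
    case 0
    then have "s' = s * x - (s * x - s' * t ^ n)" by simp
    moreover have "s * x \<in> P" using x(1) tc_idealD(3)[OF iP] by blast
    moreover have "s * x - s' * t ^ n \<in> P" using 1(3) PI(3) by blast
    ultimately have "s' \<in> P" using tc_idealD(6)[OF iP] by metis
    then show False using 1 by simp
  next
    case (Suc k)
    have "s' * t ^ n = (s' * t ^ k) * t" using Suc by (simp add: algebra_simps)
    then have st: "s' * t ^ n \<in> I" using tI tc_idealD(3)[OF iI] by metis
    have "s * x = (s * x - s' * t ^ n) + s' * t ^ n" by simp
    then have "s * x \<in> I" using 1 st tc_idealD(2)[OF iI] by metis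
    then have "s \<in> I \<or> x \<in> I" using tc_prime_idealD(3)[OF PI(2)] by blast
    then show False using 1 x PI(3) by blast
  qed
qed

lemma ideal_pow_local:
  assumes g: "good I P t"
  shows "z \<in> ideal_pow P m \<Longrightarrow> \<exists>s b. s \<notin> P \<and> s * z - t ^ m * b \<in> I"
proof (induction m arbitrary: z)
  have PI: "tc_prime_ideal P" "tc_prime_ideal I" "I \<subseteq> P" "t \<in> P"
    using g unfolding good_def by auto
  have iI: "tc_ideal I" using PI(2) tc_prime_idealD(1) by blast
  have iP: "tc_ideal P" using PI(1) tc_prime_idealD(1) by blast
  have 1: "1 \<notin> P" using PI(1) tc_prime_idealD(4) by blast
  have I0: "0 \<in> I" using tc_idealD(1)[OF iI] .
  {
    case 0
    have "1 * z - t ^ 0 * z = 0" by simp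
    then show ?case using 1 I0 by metis
  next
    case (Suc m)
    define S where "S = {z. \<exists>s b. s \<notin> P \<and> s * z - t ^ Suc m * b \<in> I}"
    have "tc_ideal S"
      unfolding tc_ideal_def
    proof (intro conjI ballI allI)
      have "1 * 0 - t ^ Suc m * 0 = 0" by simp
      then show "0 \<in> S" unfolding S_def using 1 I0 by (metis (mono_tags, lifting) mem_Collect_eq)
    next
      fix x y assume "x \<in> S" "y \<in> S"
      then obtain s1 b1 s2 b2 where h: "s1 \<notin> P" "s1 * x - t ^ Suc m * b1 \<in> I"
        "s2 \<notin> P" "s2 * y - t ^ Suc m * b2 \<in> I" unfolding S_def by blast
      have e: "(s1 * s2) * (x + y) - t ^ Suc m * (s2 * b1 + s1 * b2) =
         s2 * (s1 * x - t ^ Suc m * b1) + s1 * (s2 * y - t ^ Suc m * b2)"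
        by (simp add: algebra_simps)
      have "s2 * (s1 * x - t ^ Suc m * b1) \<in> I" using h(2) tc_idealD(3)[OF iI] by blast
      moreover have "s1 * (s2 * y - t ^ Suc m * b2) \<in> I" using h(4) tc_idealD(3)[OF iI] by blast
      ultimately have "(s1 * s2) * (x + y) - t ^ Suc m * (s2 * b1 + s1 * b2) \<in> I"
        unfolding e using tc_idealD(2)[OF iI] by blast
      moreover have "s1 * s2 \<notin> P" using h(1,3) tc_prime_idealD(5)[OF PI(1)] by blast
      ultimately show "x + y \<in> S" unfolding S_def by blast
    next
      fix x r assume "x \<in> S"
      then obtain s1 b1 where h: "s1 \<notin> P" "s1 * x - t ^ Suc m * b1 \<in> I" unfolding S_def by blast
      have "s1 * (r * x) - t ^ Suc m * (r * b1) = r * (s1 * x - t ^ Suc m * b1)"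
        by (simp add: algebra_simps)
      also have "\<dots> \<in> I" using h(2) tc_idealD(3)[OF iI] by blast
      finally show "r * x \<in> S" unfolding S_def using h(1) by blast
    qed
    moreover have "{x * y |x y. x \<in> P \<and> y \<in> ideal_pow P m} \<subseteq> S"
    proof clarify
      fix x y assume xP: "x \<in> P" and y: "y \<in> ideal_pow P m"
      obtain s2 b2 where h2: "s2 \<notin> P" "s2 * y - t ^ m * b2 \<in> I" using Suc.IH[OF y] by blast
      show "x * y \<in> S"
      proof (cases "x \<in> I")
        case True
        then have "1 * (x * y) - t ^ Suc m * 0 \<in> I" using tc_idealD(4)[OF iI] by simp
        then show ?thesis unfolding S_def using 1 by blast
      next
        case False
        then obtain n s s' where h: "s \<notin> P" "s' \<notin> P" "s * x - s' * t ^ n \<in> I"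
          using g unfolding good_def locally_pow_def by blast
        have "n \<noteq> 0"
        proof
          assume "n = 0"
          then have "s' = s * x - (s * x - s' * t ^ n)" by simp
          moreover have "s * x \<in> P" using xP tc_idealD(3)[OF iP] by blast
          moreover have "s * x - s' * t ^ n \<in> P" using h(3) PI(3) by blast
          ultimately have "s' \<in> P" using tc_idealD(6)[OF iP] by metis
          then show False using h by simp
        qed
        then obtain k where n: "n = Suc k" by (cases n) auto
        have e: "(s * s2) * (x * y) - t ^ Suc m * (s' * t ^ k * b2) =
           (s2 * y) * (s * x - s' * t ^ n) + (s' * t ^ n) * (s2 * y - t ^ m * b2)"
          by (simp add: algebra_simps n)
        have "(s2 * y) * (s * x - s' * t ^ n) \<in> I" using h(3) tc_idealD(3)[OF iI] by blast
        moreover have "(s' * t ^ n) * (s2 * y - t ^ m * b2) \<in> I" using h2(2) tc_idealD(3)[OF iI] by blast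
        ultimately have "(s * s2) * (x * y) - t ^ Suc m * (s' * t ^ k * b2) \<in> I"
          unfolding e using tc_idealD(2)[OF iI] by blast
        moreover have "s * s2 \<notin> P" using h(1) h2(1) tc_prime_idealD(5)[OF PI(1)] by blast
        ultimately show ?thesis unfolding S_def by blast
      qed
    qed
    ultimately have "ideal_pow P (Suc m) \<subseteq> S" by (simp add: ideal_gen_least)
    then show ?case using Suc.prems unfolding S_def by blast
  }
qed

lemma valuation_good:
  assumes g: "good I P t" and lp: "locally_pow I P t x n" and xI: "x \<notin> I"
  shows "valuation_mod I P x = int n"
proof -
  have PI: "tc_prime_ideal P" "tc_prime_ideal I" "I \<subseteq> P" "t \<in> P"
    using g unfolding good_def by auto
  have iI: "tc_ideal I" using PI(2) tc_prime_idealD(1) by blast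
  have iP: "tc_ideal P" using PI(1) tc_prime_idealD(1) by blast
  have tI: "t \<notin> I" using good_t_notin[OF g] .
  obtain s s' where h: "s \<notin> P" "s' \<notin> P" "s * x - s' * t ^ n \<in> I"
    using lp unfolding locally_pow_def by blast
  let ?T = "\<lambda>m. \<exists>s. s \<notin> P \<and> s * x \<in> {a + b |a b. a \<in> ideal_pow P m \<and> b \<in> I}"
  have "?T n"
  proof -
    have "s' * t ^ n \<in> ideal_pow P n"
      using tc_idealD(3)[OF ideal_pow_ideal pow_in_ideal_pow[OF PI(4)]] by blast
    moreover have "s * x = s' * t ^ n + (s * x - s' * t ^ n)" by simp
    ultimately show ?thesis using h by blast
  qed
  moreover have "m \<le> n" if "?T m" for m
  proof (rule ccontr)
    assume mn: "\<not> m \<le> n"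
    from that obtain s1 a b where h1: "s1 \<notin> P" "s1 * x = a + b" "a \<in> ideal_pow P m" "b \<in> I" by blast
    obtain s2 c where h2: "s2 \<notin> P" "s2 * a - t ^ m * c \<in> I" using ideal_pow_local[OF g h1(3)] by blast
    obtain k where m: "m = n + Suc k" using mn by (metis add_Suc_right less_imp_Suc_add not_le)
    have e: "t ^ n * (s2 * s1 * s' - s * t ^ Suc k * c) =
      - (s2 * s1 * (s * x - s' * t ^ n)) + s * (s2 * a - t ^ m * c) + s * s2 * b"
    proof -
      have "s1 * (s2 * (s * x)) = (s1 * x) * (s2 * s)" by (simp add: algebra_simps)
      then have X: "s1 * (s2 * (s * x)) = a * (s2 * s) + b * (s2 * s)" using h1(2) by (simp add: algebra_simps)
      show ?thesis by (simp add: algebra_simps m power_add X)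
    qed
    have "s2 * s1 * (s * x - s' * t ^ n) \<in> I" using h(3) tc_idealD(3)[OF iI] by blast
    then have A: "- (s2 * s1 * (s * x - s' * t ^ n)) \<in> I" using tc_idealD(5)[OF iI] by blast
    have B: "s * (s2 * a - t ^ m * c) \<in> I" using h2(2) tc_idealD(3)[OF iI] by blast
    have C: "s * s2 * b \<in> I" using h1(4) tc_idealD(3)[OF iI] by blast
    have "- (s2 * s1 * (s * x - s' * t ^ n)) + s * (s2 * a - t ^ m * c) \<in> I"
      using A B tc_idealD(2)[OF iI] by blast
    then have "t ^ n * (s2 * s1 * s' - s * t ^ Suc k * c) \<in> I"
      unfolding e using C tc_idealD(2)[OF iI] by blast
    moreover have "t ^ n \<notin> I" using prime_ideal_pow_notin[OF PI(2) tI] .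
    ultimately have D: "s2 * s1 * s' - s * t ^ Suc k * c \<in> P"
      using tc_prime_idealD(3)[OF PI(2)] PI(3) by blast
    have "s * t ^ Suc k * c = t * (s * t ^ k * c)" by (simp add: algebra_simps)
    then have E: "s * t ^ Suc k * c \<in> P" using PI(4) tc_idealD(4)[OF iP] by metis
    have "s2 * s1 * s' = (s2 * s1 * s' - s * t ^ Suc k * c) + s * t ^ Suc k * c" by simp
    then have "s2 * s1 * s' \<in> P" using D E tc_idealD(2)[OF iP] by metis
    moreover have "s2 * s1 \<notin> P" using h1(1) h2(1) tc_prime_idealD(5)[OF PI(1)] by blast
    ultimately show False using h(2) tc_prime_idealD(5)[OF PI(1)] by blast
  qed
  ultimately have "(GREATEST m. ?T m) = n" by (intro Greatest_equality) auto
  then show ?thesis unfolding valuation_mod_def by simp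
qed


definition all_good :: "'b::comm_ring_1 set \<Rightarrow> bool" where
  "all_good I \<longleftrightarrow> tc_prime_ideal I \<and> (\<forall>P\<in>height_one_primes_mod I. \<exists>t. good I P t)"

lemma all_goodD:
  assumes "all_good I" "P \<in> height_one_primes_mod I"
  obtains t where "good I P t"
  using assms unfolding all_good_def by blast

lemma valuation_mult:
  assumes "good I P t" "x \<notin> I" "y \<notin> I"
  shows "valuation_mod I P (x * y) = valuation_mod I P x + valuation_mod I P y"
proof -
  have PI: "tc_prime_ideal P" "tc_prime_ideal I"
    using assms unfolding good_def by auto
  obtain n where n: "locally_pow I P t x n" using assms unfolding good_def by blast
  obtain m where m: "locally_pow I P t y m" using assms unfolding good_def by blast
  have xy: "x * y \<notin> I" using assms(2,3) tc_prime_idealD(5)[OF PI(2)] by blast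
  have "locally_pow I P t (x * y) (n + m)"
    using locally_pow_mult[OF tc_prime_idealD(1)[OF PI(2)] PI(1) n m] .
  then show ?thesis using valuation_good[OF assms(1)] n m assms xy by simp
qed

lemma valuation_notin:
  assumes "good I P t" "x \<notin> P"
  shows "valuation_mod I P x = 0"
proof -
  have PI: "tc_prime_ideal P" "tc_prime_ideal I" "I \<subseteq> P"
    using assms unfolding good_def by auto
  have "locally_pow I P t x 0"
    using locally_pow_zero[OF tc_prime_idealD(1)[OF PI(2)] assms(2) tc_prime_idealD(4)[OF PI(1)]] .
  moreover have "x \<notin> I" using assms(2) PI(3) by blast
  ultimately show ?thesis using valuation_good[OF assms(1)] by fastforce
qed

lemma valuation_cong:
  assumes "good I P t" "x \<notin> I" "x - x' \<in> I"
  shows "valuation_mod I P x' = valuation_mod I P x"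
proof -
  have PI: "tc_prime_ideal P" "tc_prime_ideal I"
    using assms unfolding good_def by auto
  have iI: "tc_ideal I" using tc_prime_idealD(1)[OF PI(2)] .
  obtain n where n: "locally_pow I P t x n" using assms unfolding good_def by blast
  have x': "x' \<notin> I"
  proof
    assume "x' \<in> I"
    then have "(x - x') + x' \<in> I" using assms(3) tc_idealD(2)[OF iI] by blast
    then show False using assms(2) by simp
  qed
  show ?thesis using valuation_good[OF assms(1) n assms(2)]
      valuation_good[OF assms(1) locally_pow_cong[OF iI n assms(3)] x'] by simp
qed

lemma valuation_pos:
  assumes "good I P t" "x \<in> P" "x \<notin> I"
  shows "valuation_mod I P x > 0"
proof -
  have PI: "tc_prime_ideal P" "tc_prime_ideal I" "I \<subseteq> P"
    using assms unfolding good_def by auto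
  have iP: "tc_ideal P" using tc_prime_idealD(1)[OF PI(1)] .
  obtain n s s' where h: "s \<notin> P" "s' \<notin> P" "s * x - s' * t ^ n \<in> I"
    using assms unfolding good_def locally_pow_def by blast
  have "n \<noteq> 0"
  proof
    assume "n = 0"
    then have "s' = s * x - (s * x - s' * t ^ n)" by simp
    moreover have "s * x \<in> P" using assms(2) tc_idealD(3)[OF iP] by blast
    moreover have "s * x - s' * t ^ n \<in> P" using h(3) PI(3) by blast
    ultimately have "s' \<in> P" using tc_idealD(6)[OF iP] by metis
    then show False using h by simp
  qed
  moreover have "locally_pow I P t x n" using h unfolding locally_pow_def by blast
  ultimately show ?thesis using valuation_good[OF assms(1) _ assms(3), of n] by simp
qed

lemma div_mod_mult:
  assumes "all_good I" "x \<notin> I" "y \<notin> I"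
  shows "div_mod I (x * y) P = div_mod I x P + div_mod I y P"
proof (cases "P \<in> height_one_primes_mod I")
  case True
  then obtain t where "good I P t" using all_goodD[OF assms(1)] by blast
  then show ?thesis using valuation_mult assms True unfolding div_mod_def by simp
qed (simp add: div_mod_def)

lemma div_mod_cong:
  assumes "all_good I" "x \<notin> I" "x - x' \<in> I"
  shows "div_mod I x' P = div_mod I x P"
proof (cases "P \<in> height_one_primes_mod I")
  case True
  then obtain t where "good I P t" using all_goodD[OF assms(1)] by blast
  then show ?thesis using valuation_cong assms True unfolding div_mod_def by simp
qed (simp add: div_mod_def)

lemma div_mod_notin:
  assumes "all_good I" "x \<notin> P"
  shows "div_mod I x P = 0"
proof (cases "P \<in> height_one_primes_mod I")
  case True
  then obtain t where "good I P t" using all_goodD[OF assms(1)] by blast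
  then show ?thesis using valuation_notin assms True unfolding div_mod_def by simp
qed (simp add: div_mod_def)

lemma div_mod_nonzero:
  assumes "all_good I" "div_mod I x P \<noteq> 0"
  shows "x \<in> P" "P \<in> height_one_primes_mod I"
  using assms div_mod_notin[OF assms(1), of x P] unfolding div_mod_def by (auto split: if_splits)

lemma prime_ideal_mult_notin:
  assumes "tc_prime_ideal I" "x \<notin> I" "y \<notin> I" shows "x * y \<notin> I"
  using tc_prime_idealD(5)[OF assms] .

lemma div_mod_pow:
  assumes "all_good I" "x \<notin> I"
  shows "div_mod I (x ^ k) P = int k * div_mod I x P" "x ^ k \<notin> I"
proof -
  have PI: "tc_prime_ideal I" using assms(1) unfolding all_good_def by blast
  show xk: "x ^ k \<notin> I" using prime_ideal_pow_notin[OF PI assms(2)] .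
  show "div_mod I (x ^ k) P = int k * div_mod I x P"
  proof (induction k)
    case 0
    have "div_mod I (1 * 1) P = div_mod I 1 P + div_mod I 1 P"
      using div_mod_mult[OF assms(1)] tc_prime_idealD(4)[OF PI] by blast
    then show ?case by simp
  next
    case (Suc k)
    have "div_mod I (x * x ^ k) P = div_mod I x P + div_mod I (x ^ k) P"
      using div_mod_mult[OF assms(1) assms(2) prime_ideal_pow_notin[OF PI assms(2)]] .
    then show ?case using Suc by (simp add: algebra_simps)
  qed
qed

lemma div_mod_one: "all_good I \<Longrightarrow> div_mod I 1 P = 0"
  using div_mod_pow(1)[of I 1 0 P] tc_prime_idealD(4) unfolding all_good_def by auto



lemma prime_element_not_unit: "prime_element p \<Longrightarrow> \<not> p dvd 1"
  unfolding prime_element_def by blast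

lemma prime_element_nz: "prime_element p \<Longrightarrow> p \<noteq> 0"
  unfolding prime_element_def by blast

lemma prime_element_dvd_multD: "prime_element p \<Longrightarrow> p dvd a * b \<Longrightarrow> p dvd a \<or> p dvd b"
  unfolding prime_element_def by blast

lemma prime_element_irred:
  assumes q: "prime_element (q::'r::idom)" and p: "\<not> p dvd 1" and c: "q = p * c"
  shows "c dvd 1"
proof -
  have "q dvd p * c" using c by simp
  then have "q dvd p \<or> q dvd c" using prime_element_dvd_multD[OF q] by blast
  then show ?thesis
  proof
    assume "q dvd p"
    then obtain d where d: "p = q * d" by (auto elim: dvdE)
    then have "q * 1 = q * d * c" using c by simp
    then have "q * 1 = q * (d * c)" by (simp add: mult.assoc)
    then have "d * c = 1" using prime_element_nz[OF q] mult_left_cancel by metis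
    then show ?thesis by (metis dvd_triv_right)
  next
    assume "q dvd c"
    then obtain e where e: "c = q * e" by (auto elim: dvdE)
    then have "q * 1 = p * (q * e)" using c by simp
    then have "q * 1 = q * (p * e)" by (simp add: mult.left_commute)
    then have "p * e = 1" using prime_element_nz[OF q] mult_left_cancel by metis
    then show ?thesis using p by (metis dvd_triv_left)
  qed
qed

definition mu :: "'r::idom \<Rightarrow> nat" where
  "mu r = (LEAST k. \<exists>ps u. length ps = k \<and> u dvd 1 \<and> (\<forall>p\<in>set ps. prime_element p) \<and> r = u * prod_list ps)"

lemma fd_factor:
  assumes "factorial_domain TYPE('r::idom)" "(r::'r) \<noteq> 0"
  shows "\<exists>ps u. u dvd 1 \<and> (\<forall>p\<in>set ps. prime_element p) \<and> r = u * prod_list ps"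
proof (cases "r dvd 1")
  case True
  then show ?thesis by (intro exI[of _ "[]"] exI[of _ r]) simp
next
  case False
  then obtain ps where "\<forall>p\<in>set ps. prime_element p" "r = prod_list ps"
    using assms unfolding factorial_domain_def by blast
  then show ?thesis by (intro exI[of _ ps] exI[of _ 1]) simp
qed

lemma mu_witness:
  assumes "factorial_domain TYPE('r::idom)" "(r::'r) \<noteq> 0"
  obtains ps u where "length ps = mu r" "u dvd 1" "\<forall>p\<in>set ps. prime_element p" "r = u * prod_list ps"
proof -
  let ?P = "\<lambda>k. \<exists>ps u. length ps = k \<and> u dvd 1 \<and> (\<forall>p\<in>set ps. prime_element p) \<and> r = u * prod_list ps"
  obtain ps u where "u dvd 1 \<and> (\<forall>p\<in>set ps. prime_element p) \<and> r = u * prod_list ps"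
    using fd_factor[OF assms] by blast
  then have "?P (length ps)" by blast
  then have "?P (mu r)" unfolding mu_def by (rule LeastI)
  then show ?thesis using that by blast
qed

lemma mu_le:
  assumes "u dvd 1" "\<forall>p\<in>set ps. prime_element p" "r = u * prod_list ps"
  shows "mu r \<le> length ps"
  unfolding mu_def using assms by (intro Least_le) blast

lemma prime_element_dvd_prod_list_ex:
  assumes "prime_element p" "p dvd prod_list ps"
  shows "\<exists>q\<in>set ps. p dvd q"
  using assms(2)
proof (induction ps)
  case Nil then show ?case using assms(1) prime_element_not_unit by auto
next
  case (Cons a ps)
  then show ?case using prime_element_dvd_multD[OF assms(1)] by auto
qed

lemma prod_list_remove1_eq:
  "q \<in> set ps \<Longrightarrow> prod_list (ps::'a::comm_monoid_mult list) = q * prod_list (remove1 q ps)"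
  by (induction ps) (auto simp: ac_simps)

lemma mu_dec:
  assumes fd: "factorial_domain TYPE('r::idom)" and r: "(r::'r) \<noteq> 0"
    and p: "prime_element p" and rp: "r = p * r'"
  shows "mu r' < mu r"
proof -
  obtain ps u where h: "length ps = mu r" "u dvd 1" "\<forall>p\<in>set ps. prime_element p" "r = u * prod_list ps"
    using mu_witness[OF fd r] by blast
  have "p dvd r" using rp by simp
  then have "p dvd u * prod_list ps" using h(4) by simp
  moreover have "\<not> p dvd u"
  proof
    assume "p dvd u"
    then have "p dvd 1" using h(2) dvd_trans by blast
    then show False using p prime_element_not_unit by blast
  qed
  ultimately have "p dvd prod_list ps" using prime_element_dvd_multD[OF p] by blast
  then obtain q where q: "q \<in> set ps" "p dvd q" using prime_element_dvd_prod_list_ex[OF p] by blast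
  then obtain c where c: "q = p * c" by (auto elim: dvdE)
  have qp: "prime_element q" using h(3) q(1) by blast
  have pnu: "\<not> p dvd 1" using p prime_element_not_unit by blast
  have cu: "c dvd 1" using prime_element_irred[OF qp pnu c] .
  have "p * r' = u * (q * prod_list (remove1 q ps))"
    using rp h(4) prod_list_remove1_eq[OF q(1)] by simp
  also have "\<dots> = p * (u * c * prod_list (remove1 q ps))" using c by (simp add: ac_simps)
  finally have "p * r' = p * (u * c * prod_list (remove1 q ps))" .
  then have E: "r' = (u * c) * prod_list (remove1 q ps)" using mult_left_cancel[OF prime_element_nz[OF p]] by blast
  have U: "(u * c) dvd 1" using mult_dvd_mono[OF h(2) cu] by simp
  have Pr: "\<forall>p\<in>set (remove1 q ps). prime_element p" using h(3) set_remove1_subset by (metis subsetD)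
  have "mu r' \<le> length (remove1 q ps)" using mu_le[OF U Pr E] .
  also have "\<dots> < mu r"
  proof -
    have "length ps > 0" using length_pos_if_in_set[OF q(1)] .
    moreover have "length (remove1 q ps) = length ps - 1" using q(1) by (simp add: length_remove1)
    ultimately show ?thesis using h(1) by linarith
  qed
  finally show ?thesis .
qed

lemma ord_decomp:
  assumes fd: "factorial_domain TYPE('r::idom)" and p: "prime_element p"
  shows "(r::'r) \<noteq> 0 \<Longrightarrow> \<exists>n r'. r = p ^ n * r' \<and> \<not> p dvd r'"
proof (induction "mu r" arbitrary: r rule: less_induct)
  case less
  show ?case
  proof (cases "p dvd r")
    case False then show ?thesis by (intro exI[of _ 0] exI[of _ r]) simp
  next
    case True
    then obtain r' where r': "r = p * r'" by (auto elim: dvdE)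
    then have "r' \<noteq> 0" using less.prems by auto
    moreover have "mu r' < mu r" using mu_dec[OF fd less.prems p r'] .
    ultimately obtain n r'' where "r' = p ^ n * r''" "\<not> p dvd r''" using less.hyps by blast
    then show ?thesis using r' by (intro exI[of _ "Suc n"] exI[of _ r'']) (simp add: algebra_simps)
  qed
qed

lemma prime_factor_exists_fd:
  assumes fd: "factorial_domain TYPE('r::idom)" and "(r::'r) \<noteq> 0" "\<not> r dvd 1"
  shows "\<exists>p. prime_element p \<and> p dvd r"
proof -
  obtain ps where "\<forall>p\<in>set ps. prime_element p" "r = prod_list ps"
    using assms unfolding factorial_domain_def by blast
  moreover then have "ps \<noteq> []" using assms by auto
  then obtain q where "q \<in> set ps" by (cases ps) auto
  ultimately show ?thesis using prod_list_remove1_eq[of q ps] by (metis dvd_triv_left)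
qed


section \<open>Vertical primes in R[w]\<close>

definition qv :: "'r::idom \<Rightarrow> 'r poly set" where
  "qv p = {y. [:p:] dvd y}"

definition minprime :: "'r::idom poly set \<Rightarrow> bool" where
  "minprime q \<longleftrightarrow> tc_prime_ideal q \<and> (\<exists>y\<in>q. y \<noteq> 0) \<and>
     (\<forall>q'. tc_prime_ideal q' \<and> (\<exists>y\<in>q'. y \<noteq> 0) \<and> q' \<subseteq> q \<longrightarrow> q' = q)"

lemma const_mult: "[:a:] * [:b:] = [:a * b::'a::comm_semiring_1:]"
  by (simp add: mult.commute)

lemma tc_ideal_dvd: "tc_ideal {y::'a::comm_ring_1. a dvd y}"
  unfolding tc_ideal_def by (auto intro: dvd_add dvd_mult)

lemma qv_ideal: "tc_ideal (qv p)"
  unfolding qv_def by (rule tc_ideal_dvd)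

lemma gauss_qv:
  fixes x y :: "'r::idom poly"
  assumes "prime_element p" "[:p:] dvd x * y"
  shows "[:p:] dvd x \<or> [:p:] dvd y"
proof (rule ccontr)
  assume "\<not> ([:p:] dvd x \<or> [:p:] dvd y)"
  then have ex: "\<exists>i. \<not> p dvd coeff x i" "\<exists>j. \<not> p dvd coeff y j"
    by (auto simp: const_poly_dvd_iff)
  define i where "i = (LEAST i. \<not> p dvd coeff x i)"
  define j where "j = (LEAST j. \<not> p dvd coeff y j)"
  have i: "\<not> p dvd coeff x i" unfolding i_def using ex(1) by (rule LeastI_ex)
  have j: "\<not> p dvd coeff y j" unfolding j_def using ex(2) by (rule LeastI_ex)
  have ilt: "p dvd coeff x k" if "k < i" for k using that not_less_Least unfolding i_def by blast
  have jlt: "p dvd coeff y k" if "k < j" for k using that not_less_Least unfolding j_def by blast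
  have tot: "p dvd coeff (x * y) (i + j)" using assms(2) by (simp add: const_poly_dvd_iff)
  have fin: "finite {..i+j}" by simp
  have iin: "i \<in> {..i+j}" by simp
  have split: "coeff (x * y) (i + j) = coeff x i * coeff y (i + j - i) +
      (\<Sum>k\<in>{..i+j} - {i}. coeff x k * coeff y (i + j - k))"
    unfolding coeff_mult by (rule sum.remove[OF fin iin])
  have rest: "p dvd (\<Sum>k\<in>{..i+j} - {i}. coeff x k * coeff y (i + j - k))"
  proof (rule dvd_sum)
    fix k assume k: "k \<in> {..i+j} - {i}"
    show "p dvd coeff x k * coeff y (i + j - k)"
    proof (cases "k < i")
      case True then show ?thesis using ilt by (simp add: dvd_mult2)
    next
      case False
      then have "i + j - k < j" using k by auto
      then show ?thesis using jlt by (simp add: dvd_mult)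
    qed
  qed
  have "coeff x i * coeff y j = coeff (x * y) (i + j) - (\<Sum>k\<in>{..i+j} - {i}. coeff x k * coeff y (i + j - k))"
    using split by simp
  moreover have "p dvd coeff (x * y) (i + j) - (\<Sum>k\<in>{..i+j} - {i}. coeff x k * coeff y (i + j - k))"
    by (rule dvd_diff[OF tot rest])
  ultimately have dv: "p dvd coeff x i * coeff y j" by simp
  show False using prime_element_dvd_multD[OF assms(1) dv] i j by blast
qed

lemma qv_prime:
  assumes "prime_element (p::'r::idom)"
  shows "tc_prime_ideal (qv p)"
  unfolding tc_prime_ideal_def
proof (intro conjI allI impI)
  show "tc_ideal (qv p)" by (rule qv_ideal)
  have "1 \<notin> qv p" using prime_element_not_unit[OF assms] by (simp add: qv_def is_unit_const_poly_iff)
  then show "qv p \<noteq> UNIV" by blast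
  fix x y assume "x * y \<in> qv p"
  then show "x \<in> qv p \<or> y \<in> qv p" using gauss_qv[OF assms] unfolding qv_def by blast
qed

lemma qv_nonzero:
  assumes "prime_element (p::'r::idom)" shows "[:p:] \<in> qv p" "[:p:] \<noteq> 0"
  using prime_element_nz[OF assms] by (auto simp: qv_def)

lemma poly_ord_decomp:
  assumes fd: "factorial_domain TYPE('r::idom)" and p: "prime_element (p::'r)"
  shows "(y::'r poly) \<noteq> 0 \<Longrightarrow> \<exists>n y'. y = [:p:] ^ n * y' \<and> \<not> [:p:] dvd y'"
proof (induction "mu (lead_coeff y)" arbitrary: y rule: less_induct)
  case less
  show ?case
  proof (cases "[:p:] dvd y")
    case False then show ?thesis by (intro exI[of _ 0] exI[of _ y]) simp
  next
    case True
    then obtain y1 where y1: "y = [:p:] * y1" by (auto elim: dvdE)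
    then have y1nz: "y1 \<noteq> 0" using less.prems by auto
    have e: "lead_coeff y = p * lead_coeff y1" using y1 by (simp add: lead_coeff_mult)
    have "lead_coeff y \<noteq> 0" using less.prems by simp
    then have "mu (lead_coeff y1) < mu (lead_coeff y)"
      using mu_dec[OF fd _ p e] by blast
    then obtain n y' where "y1 = [:p:] ^ n * y'" "\<not> [:p:] dvd y'" using less.hyps y1nz by blast
    then show ?thesis using y1 by (intro exI[of _ "Suc n"] exI[of _ y']) (simp add: algebra_simps)
  qed
qed

lemma primitive_decomp:
  assumes fd: "factorial_domain TYPE('r::idom)"
  shows "(z::'r poly) \<noteq> 0 \<Longrightarrow> \<exists>c z'. c \<noteq> 0 \<and> z = [:c:] * z' \<and> (\<forall>p. prime_element p \<longrightarrow> \<not> [:p:] dvd z')"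
proof (induction "mu (lead_coeff z)" arbitrary: z rule: less_induct)
  case less
  show ?case
  proof (cases "\<exists>p. prime_element p \<and> [:p:] dvd z")
    case False then show ?thesis by (intro exI[of _ 1] exI[of _ z]) auto
  next
    case True
    then obtain p where p: "prime_element p" "[:p:] dvd z" by blast
    then obtain y1 where y1: "z = [:p:] * y1" by (auto elim: dvdE)
    then have y1nz: "y1 \<noteq> 0" using less.prems by auto
    have e: "lead_coeff z = p * lead_coeff y1" using y1 by (simp add: lead_coeff_mult)
    have "lead_coeff z \<noteq> 0" using less.prems by simp
    then have "mu (lead_coeff y1) < mu (lead_coeff z)"
      using mu_dec[OF fd _ p(1) e] by blast
    then obtain c z' where h: "c \<noteq> 0" "y1 = [:c:] * z'" "\<forall>p. prime_element p \<longrightarrow> \<not> [:p:] dvd z'"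
      using less.hyps y1nz by blast
    have "z = [:p * c:] * z'" using y1 h(2) by (simp add: algebra_simps)
    then show ?thesis using h prime_element_nz[OF p(1)] by (intro exI[of _ "p * c"] exI[of _ z']) simp
  qed
qed

lemma prime_ideal_prod_list:
  assumes "tc_prime_ideal q" "prod_list xs \<in> q"
  shows "\<exists>x\<in>set xs. x \<in> q"
  using assms(2)
proof (induction xs)
  case Nil then show ?case using tc_prime_idealD(4)[OF assms(1)] by simp
next
  case (Cons a xs)
  then show ?case using tc_prime_idealD(3)[OF assms(1), of a "prod_list xs"] by auto
qed

lemma const_in_prime:
  assumes fd: "factorial_domain TYPE('r::idom)" and q: "tc_prime_ideal q"
    and r: "[:r:] \<in> q" "(r::'r) \<noteq> 0"
  shows "\<exists>p. prime_element p \<and> [:p:] \<in> q"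
proof -
  have nu: "\<not> r dvd 1"
  proof
    assume "r dvd 1"
    then obtain s where "1 = r * s" by (auto elim: dvdE)
    then have rs: "r * s = 1" by simp
    have "[:r:] * [:s:] = [:r * s:]" by (rule const_mult)
    also have "\<dots> = 1" using rs by simp
    finally have "1 = [:r:] * [:s:]" by simp
    then have "1 \<in> q" using r(1) tc_idealD(4)[OF tc_prime_idealD(1)[OF q]] by metis
    then show False using tc_prime_idealD(4)[OF q] by blast
  qed
  obtain ps where ps: "\<forall>p\<in>set ps. prime_element p" "r = prod_list ps"
    using fd r(2) nu unfolding factorial_domain_def by blast
  have "[:r:] = prod_list (map (\<lambda>p. [:p:]) ps)" unfolding ps(2)
  proof (induction ps)
    case (Cons a ps)
    have "[:prod_list (a # ps):] = [:a:] * [:prod_list ps:]" by (simp add: const_mult)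
    then show ?case using Cons by simp
  qed simp
  then obtain x where "x \<in> set (map (\<lambda>p. [:p:]) ps)" "x \<in> q"
    using prime_ideal_prod_list[OF q] r(1) by metis
  then show ?thesis using ps(1) by auto
qed

lemma qv_subset:
  assumes q: "tc_prime_ideal q" "[:p:] \<in> q" shows "qv p \<subseteq> q"
proof
  fix y assume "y \<in> qv p"
  then obtain y' where "y = [:p:] * y'" unfolding qv_def by (auto elim: dvdE)
  then show "y \<in> q" using tc_idealD(4)[OF tc_prime_idealD(1)[OF q(1)] q(2)] by simp
qed

lemma const_notin_prime:
  assumes q: "tc_prime_ideal q" and "\<forall>r. [:r:] \<in> q \<longrightarrow> r = 0" and "r \<noteq> 0"
  shows "[:r:] \<notin> q"
  using assms by blast

lemma qv_minimal:
  assumes fd: "factorial_domain TYPE('r::idom)" and p: "prime_element (p::'r)"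
    and q': "tc_prime_ideal q'" "\<exists>y\<in>q'. y \<noteq> 0" "q' \<subseteq> qv p"
  shows "q' = qv p"
proof (cases "\<exists>r. r \<noteq> 0 \<and> [:r:] \<in> q'")
  case True
  then obtain r where "r \<noteq> 0" "[:r:] \<in> q'" by blast
  then obtain p' where p': "prime_element p'" "[:p':] \<in> q'" using const_in_prime[OF fd q'(1)] by blast
  then have "[:p:] dvd [:p':]" using q'(3) unfolding qv_def by blast
  then have "p dvd p'" by (simp add: const_poly_dvd_const_poly_iff)
  then obtain c where c: "p' = p * c" by (auto elim: dvdE)
  have "c dvd 1" using prime_element_irred[OF p'(1) prime_element_not_unit[OF p] c] .
  then obtain d where d: "1 = c * d" by (auto elim: dvdE)
  have "p = p' * d" using c d by (simp add: mult.assoc)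
  then have "[:p:] = [:p':] * [:d:]" by (simp add: const_mult)
  then have "[:p:] \<in> q'" using p'(2) tc_idealD(4)[OF tc_prime_idealD(1)[OF q'(1)]] by metis
  then have "qv p \<subseteq> q'" using qv_subset[OF q'(1)] by blast
  then show ?thesis using q'(3) by blast
next
  case False
  then obtain y where y: "y \<in> q'" "y \<noteq> 0" using q'(2) by blast
  obtain n y' where h: "y = [:p:] ^ n * y'" "\<not> [:p:] dvd y'" using poly_ord_decomp[OF fd p y(2)] by blast
  have "[:p:] \<notin> q'" using False prime_element_nz[OF p] by blast
  then have "[:p:] ^ n \<notin> q'" using prime_ideal_pow_notin[OF q'(1)] by blast
  then have "y' \<in> q'" using tc_prime_idealD(3)[OF q'(1)] h(1) y(1) by blast
  then have "[:p:] dvd y'" using q'(3) unfolding qv_def by blast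
  then show ?thesis using h(2) by blast
qed


section \<open>Horizontal primes\<close>

lemma degree_fract_poly [simp]: "degree (fract_poly (m::'r::idom poly)) = degree m"
  by (rule degree_map_poly) simp

lemma fract_poly_power: "fract_poly (t ^ n) = fract_poly t ^ n"
  by (induction n) (simp_all add: fract_poly_mult)

lemma fract_poly_pCons: "fract_poly (pCons a p) = pCons (to_fract a) (fract_poly p)"
  by (rule map_poly_pCons) simp

lemma clear_denom:
  fixes Y :: "'r::idom fract poly"
  shows "\<exists>d z. d \<noteq> 0 \<and> smult (to_fract d) Y = fract_poly z"
proof (induction Y rule: pCons_induct)
  case 0
  show ?case by (intro exI[of _ 1] exI[of _ 0]) simp
next
  case (pCons a Y)
  then obtain d z where dz: "d \<noteq> 0" "smult (to_fract d) Y = fract_poly z" by blast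
  obtain n m where a: "a = Fract n m" "m \<noteq> 0" by (cases a) blast
  have am: "to_fract m * a = to_fract n" using a by (simp add: Fract_conv_to_fract)
  have 1: "to_fract (d * m) * a = to_fract (n * d)"
    using am by (simp add: ac_simps)
  have 2: "smult (to_fract (d * m)) Y = fract_poly (smult m z)"
    using dz(2) by (simp add: mult.commute[of d m] smult_smult[symmetric])
  have "smult (to_fract (d * m)) (pCons a Y) = pCons (to_fract (n * d)) (fract_poly (smult m z))"
    using 1 2 by simp
  also have "\<dots> = fract_poly (pCons (n * d) (smult m z))" by (simp add: fract_poly_pCons)
  finally show ?case using dz(1) a(2) by (intro exI[of _ "d * m"] exI[of _ "pCons (n * d) (smult m z)"]) simp
qed

definition qh :: "'r::idom fract poly \<Rightarrow> 'r poly set" where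
  "qh P = {y. P dvd fract_poly y}"

lemma qh_ideal: "tc_ideal (qh P)"
  unfolding tc_ideal_def qh_def
proof (intro conjI ballI allI)
  show "0 \<in> {y. P dvd fract_poly y}" by simp
next
  fix x y assume "x \<in> {y. P dvd fract_poly y}" "y \<in> {y. P dvd fract_poly y}"
  then show "x + y \<in> {y. P dvd fract_poly y}" by (simp add: dvd_add)
next
  fix x r assume "x \<in> {y. P dvd fract_poly y}"
  then show "r * x \<in> {y. P dvd fract_poly y}" by (simp add: dvd_mult)
qed

lemma qh_prime:
  assumes "prime_elem P" shows "tc_prime_ideal (qh P)"
  unfolding tc_prime_ideal_def
proof (intro conjI allI impI)
  show "tc_ideal (qh P)" by (rule qh_ideal)
  have "1 \<notin> qh P" using prime_elem_not_unit[OF assms] by (simp add: qh_def)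
  then show "qh P \<noteq> UNIV" by blast
  fix x y assume "x * y \<in> qh P"
  then have "P dvd fract_poly x * fract_poly y" by (simp add: qh_def)
  then show "x \<in> qh P \<or> y \<in> qh P" using prime_elem_dvd_multD[OF assms] unfolding qh_def by blast
qed

lemma qh_witness:
  assumes "prime_elem (P::'r::idom fract poly)"
  shows "\<exists>d z. d \<noteq> 0 \<and> z \<noteq> 0 \<and> fract_poly z = smult (to_fract d) P \<and> z \<in> qh P"
proof -
  obtain d z where dz: "d \<noteq> 0" "smult (to_fract d) P = fract_poly z" using clear_denom by blast
  have "P \<noteq> 0" using prime_elem_not_zeroI[OF assms] .
  then have "smult (to_fract d) P \<noteq> 0" using dz(1) by simp
  then have z0: "z \<noteq> 0" using dz(2) by auto
  have zq: "z \<in> qh P" unfolding qh_def mem_Collect_eq dz(2)[symmetric]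
    by (rule dvd_smult) (rule dvd_refl)
  have e: "fract_poly z = smult (to_fract d) P" using dz(2) by (rule sym)
  show ?thesis by (rule exI[of _ d], rule exI[of _ z]) (intro conjI dz(1) z0 e zq)
qed

lemma qh_no_const:
  assumes "prime_elem P" "r \<noteq> 0" shows "[:r:] \<notin> qh P"
proof
  assume "[:r:] \<in> qh P"
  then have "P dvd [:to_fract r:]" unfolding qh_def by (simp add: fract_poly_pCons)
  moreover have "is_unit [:to_fract r:]" using assms(2) by (simp add: is_unit_triv)
  ultimately have "is_unit P" using dvd_unit_imp_unit by blast
  then show False using assms(1) prime_elem_not_unit by blast
qed

lemma const_mult_smult: "[:c:] * y = smult c y"
  by simp

lemma horiz_contain:
  fixes q :: "'r::idom poly set"
  assumes q: "tc_prime_ideal q" and nc: "\<forall>r. [:r:] \<in> q \<longrightarrow> r = 0"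
  shows "y \<in> q \<Longrightarrow> y \<noteq> 0 \<Longrightarrow> \<exists>P. prime_elem P \<and> qh P \<subseteq> q"
proof (induction "degree y" arbitrary: y rule: less_induct)
  case less
  have iq: "tc_ideal q" using tc_prime_idealD(1)[OF q] .
  have dy: "degree y \<noteq> 0"
  proof
    assume "degree y = 0"
    then have "y = [:coeff y 0:]" using degree_0_id by metis
    then have "coeff y 0 = 0" using nc less.prems(1) by metis
    then show False using \<open>y = [:coeff y 0:]\<close> less.prems(2) by simp
  qed
  have fy: "fract_poly y \<noteq> 0" using less.prems(2) by simp
  have "\<not> is_unit (fract_poly y)" using is_unit_iff_degree[OF fy] dy by simp
  then obtain P where P: "P dvd fract_poly y" "prime P" using prime_divisor_exists[OF fy] by blast
  have Pe: "prime_elem P" using P(2) by blast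
  obtain M where M: "fract_poly y = P * M" using P(1) by (auto elim: dvdE)
  obtain d1 z where dz: "d1 \<noteq> 0" "z \<noteq> 0" "fract_poly z = smult (to_fract d1) P" "z \<in> qh P"
    using qh_witness[OF Pe] by blast
  obtain d2 m where dm: "d2 \<noteq> 0" "smult (to_fract d2) M = fract_poly m" using clear_denom by blast
  have "fract_poly (smult (d1 * d2) y) = fract_poly z * fract_poly m"
    using M dz(3) dm(2)[symmetric] by (simp add: ac_simps)
  then have "fract_poly (smult (d1 * d2) y) = fract_poly (z * m)" by (simp only: fract_poly_mult)
  then have e: "smult (d1 * d2) y = z * m" by (simp only: fract_poly_eq_iff)
  have "smult (d1 * d2) y \<in> q"
    using tc_idealD(3)[OF iq less.prems(1), of "[:d1 * d2:]"] by simp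
  then have "z \<in> q \<or> m \<in> q" using e tc_prime_idealD(3)[OF q] by simp
  then show ?case
  proof
    assume zq: "z \<in> q"
    have "qh P \<subseteq> q"
    proof
      fix x assume "x \<in> qh P"
      then obtain X where X: "fract_poly x = P * X" unfolding qh_def by (auto elim: dvdE)
      obtain d3 x3 where dx: "d3 \<noteq> 0" "smult (to_fract d3) X = fract_poly x3" using clear_denom by blast
      have "fract_poly (smult (d1 * d3) x) = fract_poly z * fract_poly x3"
        using X dz(3) dx(2)[symmetric] by (simp add: ac_simps)
      then have "fract_poly (smult (d1 * d3) x) = fract_poly (z * x3)" by (simp only: fract_poly_mult)
      then have "smult (d1 * d3) x = z * x3" by (simp only: fract_poly_eq_iff)
      then have "[:d1 * d3:] * x \<in> q" using tc_idealD(4)[OF iq zq] by simp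
      moreover have "[:d1 * d3:] \<notin> q" using nc dz(1) dx(1) by auto
      ultimately show "x \<in> q" using tc_prime_idealD(3)[OF q] by blast
    qed
    then show ?thesis using Pe by blast
  next
    assume mq: "m \<in> q"
    have "m \<noteq> 0" using e less.prems(2) dz(1) dm(1) by auto
    have "M \<noteq> 0" using M fy by auto
    have "P \<noteq> 0" using Pe by auto
    have "degree P \<noteq> 0"
    proof
      assume "degree P = 0"
      then have "is_unit P" using is_unit_iff_degree[OF \<open>P \<noteq> 0\<close>] by simp
      then show False using Pe prime_elem_not_unit by blast
    qed
    have "degree (fract_poly m) = degree M" using dm(1) dm(2)[symmetric] by simp
    moreover have "degree (fract_poly y) = degree P + degree M"
      using M degree_mult_eq[OF \<open>P \<noteq> 0\<close> \<open>M \<noteq> 0\<close>] by simp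
    ultimately have "degree m < degree y" using \<open>degree P \<noteq> 0\<close> by simp
    then show ?thesis using less.hyps mq \<open>m \<noteq> 0\<close> by blast
  qed
qed

lemma qh_assoc:
  assumes "prime_elem P" "prime_elem P'" "P dvd P'"
  shows "qh P = qh P'"
proof -
  obtain c where c: "P' = P * c" using assms(3) by (auto elim: dvdE)
  have "is_unit c" using irreducibleD[OF prime_elem_imp_irreducible[OF assms(2)] c] assms(1)
    prime_elem_not_unit by blast
  then have "P' dvd X \<longleftrightarrow> P dvd X" for X using c mult_unit_dvd_iff by simp
  then show ?thesis unfolding qh_def by simp
qed

lemma qh_minimal:
  fixes P :: "'r::idom fract poly"
  assumes P: "prime_elem P"
    and q': "tc_prime_ideal q'" "\<exists>y\<in>q'. y \<noteq> 0" "q' \<subseteq> qh P"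
  shows "q' = qh P"
proof -
  have nc: "\<forall>r. [:r:] \<in> q' \<longrightarrow> r = 0" using qh_no_const[OF P] q'(3) by blast
  obtain y where y: "y \<in> q'" "y \<noteq> 0" using q'(2) by blast
  obtain P' where P': "prime_elem P'" "qh P' \<subseteq> q'" using horiz_contain[OF q'(1) nc y] by blast
  obtain d z where dz: "d \<noteq> 0" "z \<noteq> 0" "fract_poly z = smult (to_fract d) P'" "z \<in> qh P'"
    using qh_witness[OF P'(1)] by blast
  have "z \<in> qh P" using dz(4) P'(2) q'(3) by blast
  then have "P dvd smult (to_fract d) P'" using dz(3) unfolding qh_def by simp
  then have "P dvd P'" using dz(1) by (simp add: dvd_smult_iff)
  then have "qh P = qh P'" using qh_assoc[OF P P'(1)] by blast
  then show ?thesis using P'(2) q'(3) by blast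
qed


section \<open>Minimal primes and uniformizers\<close>

lemma minprime_qv:
  assumes fd: "factorial_domain TYPE('r::idom)" and p: "prime_element (p::'r)"
  shows "minprime (qv p)"
  unfolding minprime_def
  using qv_prime[OF p] qv_nonzero[OF p] qv_minimal[OF fd p] by blast

lemma minprime_qh:
  assumes P: "prime_elem (P::'r::idom fract poly)"
  shows "minprime (qh P)"
proof -
  obtain d z where dz: "d \<noteq> 0" "z \<noteq> 0" "fract_poly z = smult (to_fract d) P" "z \<in> qh P"
    using qh_witness[OF P] by blast
  show ?thesis unfolding minprime_def
    using qh_prime[OF P] dz(2,4) qh_minimal[OF P] by blast
qed

lemma minprime_cases:
  assumes fd: "factorial_domain TYPE('r::idom)" and q: "minprime (q::'r poly set)"
  shows "(\<exists>p. prime_element p \<and> q = qv p) \<or> (\<exists>P. prime_elem P \<and> q = qh P)"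
proof -
  have qp: "tc_prime_ideal q" and nz: "\<exists>y\<in>q. y \<noteq> 0"
    and mn: "\<And>q'. tc_prime_ideal q' \<Longrightarrow> (\<exists>y\<in>q'. y \<noteq> 0) \<Longrightarrow> q' \<subseteq> q \<Longrightarrow> q' = q"
    using q unfolding minprime_def by blast+
  show ?thesis
  proof (cases "\<exists>r. r \<noteq> 0 \<and> [:r:] \<in> q")
    case True
    then obtain r where "r \<noteq> 0" "[:r:] \<in> q" by blast
    then obtain p where p: "prime_element p" "[:p:] \<in> q" using const_in_prime[OF fd qp] by blast
    have "qv p \<subseteq> q" using qv_subset[OF qp p(2)] .
    then have "qv p = q" using mn[OF qv_prime[OF p(1)]] qv_nonzero[OF p(1)] by blast
    then show ?thesis using p(1) by blast
  next
    case False
    then have nc: "\<forall>r. [:r:] \<in> q \<longrightarrow> r = 0" by blast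
    obtain y where "y \<in> q" "y \<noteq> 0" using nz by blast
    then obtain P where P: "prime_elem P" "qh P \<subseteq> q" using horiz_contain[OF qp nc] by blast
    obtain d z where dz: "d \<noteq> 0" "z \<noteq> 0" "fract_poly z = smult (to_fract d) P" "z \<in> qh P"
      using qh_witness[OF P(1)] by blast
    have "qh P = q" using mn[OF qh_prime[OF P(1)] _ P(2)] dz(2,4) by blast
    then show ?thesis using P(1) by blast
  qed
qed

definition has_unif :: "'r::idom poly set \<Rightarrow> 'r poly \<Rightarrow> bool" where
  "has_unif q t \<longleftrightarrow> t \<in> q \<and> (\<forall>y. y \<noteq> 0 \<longrightarrow> (\<exists>e n m. e \<notin> q \<and> m \<notin> q \<and> e * y = t ^ n * m)) \<and>
     (\<forall>q'. minprime q' \<longrightarrow> t \<in> q' \<longrightarrow> q' = q)"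

lemma unif_qv:
  assumes fd: "factorial_domain TYPE('r::idom)" and p: "prime_element (p::'r)"
  shows "has_unif (qv p) [:p:]"
  unfolding has_unif_def
proof (intro conjI allI impI)
  show "[:p:] \<in> qv p" using qv_nonzero[OF p] by blast
next
  fix y :: "'r poly" assume "y \<noteq> 0"
  then obtain n y' where h: "y = [:p:] ^ n * y'" "\<not> [:p:] dvd y'" using poly_ord_decomp[OF fd p] by blast
  have "1 \<notin> qv p" using tc_prime_idealD(4)[OF qv_prime[OF p]] .
  moreover have "y' \<notin> qv p" using h(2) unfolding qv_def by blast
  moreover have "1 * y = [:p:] ^ n * y'" using h(1) by simp
  ultimately show "\<exists>e n m. e \<notin> qv p \<and> m \<notin> qv p \<and> e * y = [:p:] ^ n * m" by blast
next
  fix q' assume q': "minprime q'" "[:p:] \<in> q'"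
  have qp: "tc_prime_ideal q'" using q'(1) unfolding minprime_def by blast
  have "qv p \<subseteq> q'" using qv_subset[OF qp q'(2)] .
  then show "q' = qv p" using q'(1) qv_prime[OF p] qv_nonzero[OF p] unfolding minprime_def by blast
qed

lemma mult_smult_prime:
  assumes "prime_elem (P::'r::idom fract poly)" "\<kappa> \<noteq> 0"
  shows "multiplicity P (smult \<kappa> P) = 1"
proof -
  have "smult \<kappa> P = [:\<kappa>:] * P" by simp
  moreover have "is_unit [:\<kappa>:]" using assms(2) by (simp add: is_unit_triv)
  ultimately have "multiplicity P (smult \<kappa> P) = multiplicity P P"
    using multiplicity_times_unit_right by metis
  also have "\<dots> = 1" using multiplicity_self[OF prime_elem_not_zeroI[OF assms(1)] prime_elem_not_unit[OF assms(1)]] .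
  finally show ?thesis .
qed

lemma unif_qh:
  assumes fd: "factorial_domain TYPE('r::idom)" and P: "prime_elem (P::'r fract poly)"
  shows "\<exists>t \<kappa>. \<kappa> \<noteq> 0 \<and> fract_poly t = smult \<kappa> P \<and> has_unif (qh P) t"
proof -
  obtain d z where dz: "d \<noteq> 0" "z \<noteq> 0" "fract_poly z = smult (to_fract d) P" "z \<in> qh P"
    using qh_witness[OF P] by blast
  obtain c t where ct: "c \<noteq> 0" "z = [:c:] * t" "\<forall>p. prime_element p \<longrightarrow> \<not> [:p:] dvd t"
    using primitive_decomp[OF fd dz(2)] by blast
  define \<kappa> where "\<kappa> = to_fract d / to_fract c"
  have k0: "\<kappa> \<noteq> 0" using dz(1) ct(1) by (simp add: \<kappa>_def)
  have "smult (to_fract c) (fract_poly t) = smult (to_fract d) P" using dz(3) ct(2) by simp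
  then have "smult (inverse (to_fract c)) (smult (to_fract c) (fract_poly t)) = smult (inverse (to_fract c)) (smult (to_fract d) P)"
    by simp
  then have tk: "fract_poly t = smult \<kappa> P" using ct(1) by (simp add: \<kappa>_def field_simps)
  have P0: "P \<noteq> 0" using prime_elem_not_zeroI[OF P] .
  have Pnu: "\<not> is_unit P" using prime_elem_not_unit[OF P] .
  have tq: "t \<in> qh P" unfolding qh_def mem_Collect_eq tk by (rule dvd_smult) (rule dvd_refl)
  have Pt: "fract_poly t dvd X" if "P dvd X" for X unfolding tk using smult_dvd[OF that k0] .
  have multt: "multiplicity P (fract_poly t) = 1" unfolding tk using mult_smult_prime[OF P k0] .
  have t0: "fract_poly t \<noteq> 0" using tk k0 P0 by simp
  have 1: "1 \<notin> qh P" using tc_prime_idealD(4)[OF qh_prime[OF P]] .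
  have loc: "y \<noteq> 0 \<Longrightarrow> \<exists>e n m. e \<notin> qh P \<and> m \<notin> qh P \<and> e * y = t ^ n * m" for y
  proof (induction "multiplicity P (fract_poly y)" arbitrary: y rule: less_induct)
    case less
    show ?case
    proof (cases "P dvd fract_poly y")
      case False
      then have "y \<notin> qh P" unfolding qh_def by simp
      then show ?thesis using 1 by (intro exI[of _ 1] exI[of _ 0] exI[of _ y]) simp
    next
      case True
      then obtain M where M: "fract_poly y = fract_poly t * M" using Pt by (auto elim: dvdE)
      obtain d2 m where dm: "d2 \<noteq> 0" "smult (to_fract d2) M = fract_poly m" using clear_denom by blast
      have "fract_poly (smult d2 y) = fract_poly t * fract_poly m" using M dm(2)[symmetric] by simp
      then have "fract_poly (smult d2 y) = fract_poly (t * m)" by (simp only: fract_poly_mult)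
      then have e: "smult d2 y = t * m" by (simp only: fract_poly_eq_iff)
      have fy: "fract_poly y \<noteq> 0" using less.prems by simp
      have M0: "M \<noteq> 0" using M fy by auto
      have m0: "m \<noteq> 0" using e less.prems dm(1) by auto
      have "multiplicity P (fract_poly y) = multiplicity P (fract_poly t) + multiplicity P M"
        using M prime_elem_multiplicity_mult_distrib[OF P t0 M0] by simp
      moreover have "multiplicity P (fract_poly m) = multiplicity P M"
      proof -
        have "fract_poly m = [:to_fract d2:] * M" using dm(2) by simp
        moreover have "is_unit [:to_fract d2:]" using dm(1) by (simp add: is_unit_triv)
        ultimately show ?thesis using multiplicity_times_unit_right by metis
      qed
      ultimately have "multiplicity P (fract_poly m) < multiplicity P (fract_poly y)" using multt by simp
      then obtain e' n m' where h: "e' \<notin> qh P" "m' \<notin> qh P" "e' * m = t ^ n * m'"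
        using less.hyps m0 by blast
      have d2q: "[:d2:] \<notin> qh P" using qh_no_const[OF P dm(1)] .
      have "(e' * [:d2:]) * y = e' * smult d2 y" by (simp add: ac_simps)
      also have "\<dots> = e' * (t * m)" using e by simp
      finally have "(e' * [:d2:]) * y = e' * (t * m)" .
      also have "\<dots> = t ^ Suc n * m'" using h(3) by (simp add: ac_simps)
      finally have "(e' * [:d2:]) * y = t ^ Suc n * m'" .
      moreover have "e' * [:d2:] \<notin> qh P" using tc_prime_idealD(5)[OF qh_prime[OF P] h(1) d2q] .
      ultimately show ?thesis using h(2) by blast
    qed
  qed
  have sep: "q' = qh P" if q': "minprime q'" "t \<in> q'" for q'
  proof -
    from minprime_cases[OF fd q'(1)] show ?thesis
    proof
      assume "\<exists>p. prime_element p \<and> q' = qv p"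
      then obtain p where "prime_element p" "q' = qv p" by blast
      then show ?thesis using q'(2) ct(3) unfolding qv_def by blast
    next
      assume "\<exists>P'. prime_elem P' \<and> q' = qh P'"
      then obtain P' where P': "prime_elem P'" "q' = qh P'" by blast
      then have "P' dvd smult \<kappa> P" using q'(2) tk unfolding qh_def by simp
      then have "P' dvd P" using k0 by (simp add: dvd_smult_iff)
      then show ?thesis using qh_assoc[OF P' (1) P] P'(2) by simp
    qed
  qed
  have "has_unif (qh P) t" unfolding has_unif_def using tq loc sep by blast
  then show ?thesis using k0 tk by blast
qed

lemma unif_qh_mult:
  assumes P: "prime_elem (P::'r::idom fract poly)" and k0: "\<kappa> \<noteq> 0" and tk: "fract_poly t = smult \<kappa> P"
    and h: "e \<notin> qh P" "m \<notin> qh P" "e * y = t ^ n * m" and y0: "y \<noteq> 0"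
  shows "multiplicity P (fract_poly y) = n"
proof -
  have e0: "e \<noteq> 0" using h(1) tc_idealD(1)[OF qh_ideal] by auto
  have m0: "m \<noteq> 0" using h(2) tc_idealD(1)[OF qh_ideal] by auto
  have P0: "P \<noteq> 0" using prime_elem_not_zeroI[OF P] .
  have t0: "fract_poly t \<noteq> 0" using tk k0 P0 by simp
  have me: "multiplicity P (fract_poly e) = 0" using h(1) unfolding qh_def
    by (simp add: not_dvd_imp_multiplicity_0)
  have mm: "multiplicity P (fract_poly m) = 0" using h(2) unfolding qh_def
    by (simp add: not_dvd_imp_multiplicity_0)
  have mt: "multiplicity P (fract_poly t) = 1" unfolding tk using mult_smult_prime[OF P k0] .
  have "fract_poly e * fract_poly y = fract_poly t ^ n * fract_poly m"
    using arg_cong[OF h(3), of fract_poly] by (simp add: fract_poly_mult fract_poly_power)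
  then have "multiplicity P (fract_poly e * fract_poly y) = multiplicity P (fract_poly t ^ n * fract_poly m)"
    by simp
  moreover have "multiplicity P (fract_poly e * fract_poly y) = multiplicity P (fract_poly y)"
    using prime_elem_multiplicity_mult_distrib[OF P] e0 y0 me by simp
  moreover have "multiplicity P (fract_poly t ^ n * fract_poly m) = n"
    using prime_elem_multiplicity_mult_distrib[OF P] prime_elem_multiplicity_power_distrib[OF P t0]
      t0 m0 mt mm by simp
  ultimately show ?thesis by simp
qed

lemma minprime_unif:
  assumes fd: "factorial_domain TYPE('r::idom)" and q: "minprime (q::'r poly set)"
  shows "\<exists>t. has_unif q t"
  using minprime_cases[OF fd q] unif_qv[OF fd] unif_qh[OF fd] by blast



lemma mI_trans: "tc_ideal I \<Longrightarrow> a - b \<in> I \<Longrightarrow> b - c \<in> I \<Longrightarrow> a - c \<in> I"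
proof -
  assume iI: "tc_ideal I" and h: "a - b \<in> I" "b - c \<in> I"
  have "a - c = (a - b) + (b - c)" by simp
  then show ?thesis using tc_idealD(2)[OF iI h] by simp
qed

lemma mI_sym: "tc_ideal I \<Longrightarrow> a - b \<in> I \<Longrightarrow> b - a \<in> I"
proof -
  assume iI: "tc_ideal I" and h: "a - b \<in> I"
  have "b - a = - (a - b)" by simp
  then show ?thesis using tc_idealD(5)[OF iI h] by simp
qed

lemma mI_mult: "tc_ideal I \<Longrightarrow> a - b \<in> I \<Longrightarrow> c * a - c * b \<in> I"
proof -
  assume iI: "tc_ideal I" and h: "a - b \<in> I"
  have "c * a - c * b = c * (a - b)" by (simp add: algebra_simps)
  then show ?thesis using tc_idealD(3)[OF iI h] by simp
qed

lemma mI_mult2: "tc_ideal I \<Longrightarrow> a - b \<in> I \<Longrightarrow> c - d \<in> I \<Longrightarrow> a * c - b * d \<in> I"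
proof -
  assume iI: "tc_ideal I" and h: "a - b \<in> I" "c - d \<in> I"
  have "a * c - b * d = c * (a - b) + b * (c - d)" by (simp add: algebra_simps)
  then show ?thesis using tc_idealD(2)[OF iI tc_idealD(3)[OF iI h(1)] tc_idealD(3)[OF iI h(2)]] by simp
qed

lemma mI_add2: "tc_ideal I \<Longrightarrow> a - b \<in> I \<Longrightarrow> c - d \<in> I \<Longrightarrow> (a + c) - (b + d) \<in> I"
proof -
  assume iI: "tc_ideal I" and h: "a - b \<in> I" "c - d \<in> I"
  have e: "(a + c) - (b + d) = (a - b) + (c - d)" by (simp add: algebra_simps)
  show ?thesis unfolding e by (rule tc_idealD(2)[OF iI h])
qed

lemma mI_refl: "tc_ideal I \<Longrightarrow> a - a \<in> I"
  using tc_idealD(1) by simp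

lemma mI_in: "tc_ideal I \<Longrightarrow> a - b \<in> I \<Longrightarrow> b \<in> I \<Longrightarrow> a \<in> I"
proof -
  assume iI: "tc_ideal I" and h: "a - b \<in> I" "b \<in> I"
  have "a = (a - b) + b" by simp
  then show ?thesis using tc_idealD(2)[OF iI h] by simp
qed

lemma mI_in_P: "tc_ideal P \<Longrightarrow> I \<subseteq> P \<Longrightarrow> a - b \<in> I \<Longrightarrow> b \<in> P \<Longrightarrow> a \<in> P"
  using mI_in[of P a b] by blast

locale wsetup =
  fixes \<psi> :: "'r::idom poly \<Rightarrow> 'r poly poly" and I :: "'r poly poly set"
  assumes psi_1: "\<psi> 1 = 1" and psi_add: "\<And>a b. \<psi> (a + b) = \<psi> a + \<psi> b"
    and psi_mult: "\<And>a b. \<psi> (a * b) = \<psi> a * \<psi> b"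
    and Iprime: "tc_prime_ideal I"
    and inj: "\<And>a. \<psi> a \<in> I \<Longrightarrow> a = 0"
    and cover: "\<And>z. \<exists>N a. \<psi> [:0,1:] ^ N * z - \<psi> a \<in> I"
begin

abbreviation "w \<equiv> \<psi> [:0,1:]"

lemma iI: "tc_ideal I" using tc_prime_idealD(1)[OF Iprime] .

lemma psi_0: "\<psi> 0 = 0"
proof -
  have "\<psi> 0 = \<psi> 0 + \<psi> 0" using psi_add[of 0 0] by simp
  then show ?thesis by (metis add_cancel_right_right)
qed

lemma psi_minus: "\<psi> (- x) = - \<psi> x"
proof -
  have "\<psi> x + \<psi> (- x) = 0" using psi_add[of x "- x"] psi_0 by simp
  then show ?thesis using add.inverse_unique by metis
qed

lemma psi_diff: "\<psi> (x - y) = \<psi> x - \<psi> y"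
  using psi_add[of x "- y"] psi_minus[of y] by simp

lemma psi_pow: "\<psi> (x ^ n) = \<psi> x ^ n"
  by (induction n) (simp_all add: psi_1 psi_mult)

lemma psi_inj_mod: "\<psi> y - \<psi> z \<in> I \<Longrightarrow> y = z"
  using inj[of "y - z"] psi_diff by simp

lemma w_notin: "w ^ N \<notin> I"
proof -
  have "w \<notin> I" using inj[of "[:0,1:]"] by auto
  then show ?thesis using prime_ideal_pow_notin[OF Iprime] by blast
qed

definition Qof :: "'r poly set \<Rightarrow> 'r poly poly set" where
  "Qof q = {x. \<exists>N y. y \<in> q \<and> w ^ N * x - \<psi> y \<in> I}"

lemma Qof_I: "I \<subseteq> Qof q" if "tc_ideal q"
proof
  fix x assume "x \<in> I"
  then have "w ^ 0 * x - \<psi> 0 \<in> I" by (simp add: psi_0)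
  moreover have "0 \<in> q" using tc_idealD(1)[OF that] .
  ultimately show "x \<in> Qof q" unfolding Qof_def by blast
qed

lemma Qof_psi:
  assumes q: "tc_prime_ideal q" "[:0,1:] \<notin> q"
  shows "\<psi> y \<in> Qof q \<longleftrightarrow> y \<in> q"
proof
  assume "y \<in> q"
  moreover have "w ^ 0 * \<psi> y - \<psi> y \<in> I" using tc_idealD(1)[OF iI] by simp
  ultimately show "\<psi> y \<in> Qof q" unfolding Qof_def by blast
next
  assume "\<psi> y \<in> Qof q"
  then obtain N g where g: "g \<in> q" "w ^ N * \<psi> y - \<psi> g \<in> I" unfolding Qof_def by blast
  then have "\<psi> ([:0,1:] ^ N * y) - \<psi> g \<in> I" by (simp add: psi_mult psi_pow)
  then have "[:0,1:] ^ N * y = g" by (rule psi_inj_mod)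
  then have "[:0,1:] ^ N * y \<in> q" using g(1) by simp
  moreover have "[:0,1:] ^ N \<notin> q" using prime_ideal_pow_notin[OF q] .
  ultimately show "y \<in> q" using tc_prime_idealD(3)[OF q(1)] by blast
qed

lemma Qof_prime:
  assumes q: "tc_prime_ideal q" "[:0,1:] \<notin> q"
  shows "tc_prime_ideal (Qof q)"
proof -
  have iq: "tc_ideal q" using tc_prime_idealD(1)[OF q(1)] .
  have ideal: "tc_ideal (Qof q)"
    unfolding tc_ideal_def
  proof (intro conjI ballI allI)
    show "0 \<in> Qof q" using Qof_I[OF iq] tc_idealD(1)[OF iI] by blast
  next
    fix x x' assume "x \<in> Qof q" "x' \<in> Qof q"
    then obtain N y M y' where h: "y \<in> q" "w ^ N * x - \<psi> y \<in> I" "y' \<in> q" "w ^ M * x' - \<psi> y' \<in> I"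
      unfolding Qof_def by blast
    have a: "w ^ M * (w ^ N * x) - w ^ M * \<psi> y \<in> I" using mI_mult[OF iI h(2)] .
    have b: "w ^ N * (w ^ M * x') - w ^ N * \<psi> y' \<in> I" using mI_mult[OF iI h(4)] .
    have "(w ^ M * (w ^ N * x) + w ^ N * (w ^ M * x')) - (w ^ M * \<psi> y + w ^ N * \<psi> y') \<in> I"
      using mI_add2[OF iI a b] .
    moreover have "w ^ M * (w ^ N * x) + w ^ N * (w ^ M * x') = w ^ (N + M) * (x + x')"
      by (simp add: algebra_simps power_add)
    moreover have "w ^ M * \<psi> y + w ^ N * \<psi> y' = \<psi> ([:0,1:] ^ M * y + [:0,1:] ^ N * y')"
      by (simp add: psi_add psi_mult psi_pow)
    moreover have "[:0,1:] ^ M * y + [:0,1:] ^ N * y' \<in> q"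
      using tc_idealD(2)[OF iq tc_idealD(3)[OF iq h(1)] tc_idealD(3)[OF iq h(3)]] .
    ultimately show "x + x' \<in> Qof q" unfolding Qof_def by auto
  next
    fix x r assume "x \<in> Qof q"
    then obtain N y where h: "y \<in> q" "w ^ N * x - \<psi> y \<in> I" unfolding Qof_def by blast
    obtain K z where z: "w ^ K * r - \<psi> z \<in> I" using cover by blast
    have "(w ^ K * r) * (w ^ N * x) - \<psi> z * \<psi> y \<in> I" using mI_mult2[OF iI z h(2)] .
    moreover have "(w ^ K * r) * (w ^ N * x) = w ^ (K + N) * (r * x)" by (simp add: algebra_simps power_add)
    moreover have "\<psi> z * \<psi> y = \<psi> (z * y)" by (simp add: psi_mult)
    moreover have "z * y \<in> q" using tc_idealD(3)[OF iq h(1)] .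
    ultimately show "r * x \<in> Qof q" unfolding Qof_def by auto
  qed
  have one: "1 \<notin> Qof q"
  proof
    assume "1 \<in> Qof q"
    then have "\<psi> 1 \<in> Qof q" by (simp add: psi_1)
    then have "1 \<in> q" using Qof_psi[OF q] by blast
    then show False using tc_prime_idealD(4)[OF q(1)] by blast
  qed
  have prime: "x \<in> Qof q \<or> x' \<in> Qof q" if xx: "x * x' \<in> Qof q" for x x'
  proof -
    obtain K g where g: "g \<in> q" "w ^ K * (x * x') - \<psi> g \<in> I" using xx unfolding Qof_def by blast
    obtain N y where y: "w ^ N * x - \<psi> y \<in> I" using cover by blast
    obtain M y' where y': "w ^ M * x' - \<psi> y' \<in> I" using cover by blast
    have "(w ^ N * x) * (w ^ M * x') - \<psi> y * \<psi> y' \<in> I" using mI_mult2[OF iI y y'] .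
    then have 1: "w ^ K * ((w ^ N * x) * (w ^ M * x')) - w ^ K * (\<psi> y * \<psi> y') \<in> I" using mI_mult[OF iI] by blast
    have "w ^ (N + M) * (w ^ K * (x * x')) - w ^ (N + M) * \<psi> g \<in> I" using mI_mult[OF iI g(2)] .
    moreover have "w ^ (N + M) * (w ^ K * (x * x')) = w ^ K * ((w ^ N * x) * (w ^ M * x'))"
      by (simp add: algebra_simps power_add)
    ultimately have 2: "w ^ K * ((w ^ N * x) * (w ^ M * x')) - w ^ (N + M) * \<psi> g \<in> I" by simp
    have "w ^ K * (\<psi> y * \<psi> y') - w ^ (N + M) * \<psi> g \<in> I"
      using mI_trans[OF iI mI_sym[OF iI 1] 2] .
    then have "\<psi> ([:0,1:] ^ K * (y * y')) - \<psi> ([:0,1:] ^ (N + M) * g) \<in> I"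
      by (simp add: psi_mult psi_pow)
    then have "[:0,1:] ^ K * (y * y') = [:0,1:] ^ (N + M) * g" by (rule psi_inj_mod)
    moreover have "[:0,1:] ^ (N + M) * g \<in> q" using tc_idealD(3)[OF tc_prime_idealD(1)[OF q(1)] g(1)] .
    ultimately have "[:0,1:] ^ K * (y * y') \<in> q" by simp
    moreover have "[:0,1:] ^ K \<notin> q" using prime_ideal_pow_notin[OF q] .
    ultimately have "y * y' \<in> q" using tc_prime_idealD(3)[OF q(1)] by blast
    then have "y \<in> q \<or> y' \<in> q" using tc_prime_idealD(3)[OF q(1)] by blast
    then show ?thesis using y y' unfolding Qof_def by blast
  qed
  show ?thesis unfolding tc_prime_ideal_def using ideal one prime by blast
qed

lemma Qof_w:
  assumes q: "tc_prime_ideal q" "[:0,1:] \<notin> q"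
  shows "w ^ N \<notin> Qof q"
proof -
  have "w \<notin> Qof q" using Qof_psi[OF q] q(2) by blast
  then show ?thesis using prime_ideal_pow_notin[OF Qof_prime[OF q]] by blast
qed

lemma Qof_proper:
  assumes q: "tc_prime_ideal q" "[:0,1:] \<notin> q" "y \<in> q" "y \<noteq> 0"
  shows "I \<noteq> Qof q"
proof -
  have "\<psi> y \<in> Qof q" using Qof_psi[OF q(1,2)] q(3) by blast
  moreover have "\<psi> y \<notin> I" using inj q(4) by blast
  ultimately show ?thesis by blast
qed

definition preim :: "'r poly poly set \<Rightarrow> 'r poly set" where
  "preim Q = {y. \<psi> y \<in> Q}"

lemma preim_prime:
  assumes Q: "tc_prime_ideal Q" "w \<notin> Q"
  shows "tc_prime_ideal (preim Q)" "[:0,1:] \<notin> preim Q"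
proof -
  have iQ: "tc_ideal Q" using tc_prime_idealD(1)[OF Q(1)] .
  have "tc_ideal (preim Q)" unfolding tc_ideal_def preim_def
  proof (intro conjI ballI allI)
    show "0 \<in> {y. \<psi> y \<in> Q}" using tc_idealD(1)[OF iQ] psi_0 by simp
  next
    fix x y assume "x \<in> {y. \<psi> y \<in> Q}" "y \<in> {y. \<psi> y \<in> Q}"
    then show "x + y \<in> {y. \<psi> y \<in> Q}" using tc_idealD(2)[OF iQ] by (simp add: psi_add)
  next
    fix x r assume "x \<in> {y. \<psi> y \<in> Q}"
    then show "r * x \<in> {y. \<psi> y \<in> Q}" using tc_idealD(3)[OF iQ] by (simp add: psi_mult)
  qed
  moreover have "1 \<notin> preim Q" using tc_prime_idealD(4)[OF Q(1)] by (simp add: preim_def psi_1)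
  moreover have "x \<in> preim Q \<or> y \<in> preim Q" if "x * y \<in> preim Q" for x y
    using that tc_prime_idealD(3)[OF Q(1)] by (simp add: preim_def psi_mult)
  ultimately show "tc_prime_ideal (preim Q)" unfolding tc_prime_ideal_def by blast
  show "[:0,1:] \<notin> preim Q" using Q(2) by (simp add: preim_def)
qed

lemma Qof_preim:
  assumes Q: "tc_prime_ideal Q" "w \<notin> Q" "I \<subseteq> Q"
  shows "Qof (preim Q) = Q"
proof
  have iQ: "tc_ideal Q" using tc_prime_idealD(1)[OF Q(1)] .
  show "Qof (preim Q) \<subseteq> Q"
  proof
    fix x assume "x \<in> Qof (preim Q)"
    then obtain N y where h: "\<psi> y \<in> Q" "w ^ N * x - \<psi> y \<in> I" unfolding Qof_def preim_def by blast
    then have "w ^ N * x \<in> Q" using mI_in_P[OF iQ Q(3) h(2) h(1)] by blast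
    moreover have "w ^ N \<notin> Q" using prime_ideal_pow_notin[OF Q(1,2)] .
    ultimately show "x \<in> Q" using tc_prime_idealD(3)[OF Q(1)] by blast
  qed
  show "Q \<subseteq> Qof (preim Q)"
  proof
    fix x assume x: "x \<in> Q"
    obtain N y where h: "w ^ N * x - \<psi> y \<in> I" using cover by blast
    have "w ^ N * x \<in> Q" using tc_idealD(3)[OF iQ x] .
    then have "\<psi> y \<in> Q" using mI_in_P[OF iQ Q(3) mI_sym[OF iI h]] by blast
    then show "x \<in> Qof (preim Q)" using h unfolding Qof_def preim_def by blast
  qed
qed

lemma preim_nonzero:
  assumes Q: "tc_prime_ideal Q" "w \<notin> Q" "I \<subseteq> Q" "I \<noteq> Q"
  shows "\<exists>y\<in>preim Q. y \<noteq> 0"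
proof -
  obtain x where x: "x \<in> Q" "x \<notin> I" using Q(3,4) by blast
  obtain N y where h: "w ^ N * x - \<psi> y \<in> I" using cover by blast
  have iQ: "tc_ideal Q" using tc_prime_idealD(1)[OF Q(1)] .
  have "w ^ N * x \<in> Q" using tc_idealD(3)[OF iQ x(1)] .
  then have "\<psi> y \<in> Q" using mI_in_P[OF iQ Q(3) mI_sym[OF iI h]] by blast
  moreover have "y \<noteq> 0"
  proof
    assume "y = 0"
    then have "w ^ N * x \<in> I" using h by (simp add: psi_0)
    then show False using tc_prime_idealD(3)[OF Iprime] w_notin x(2) by blast
  qed
  ultimately show ?thesis unfolding preim_def by blast
qed

lemma preim_mono: "Q' \<subseteq> Q \<Longrightarrow> preim Q' \<subseteq> preim Q"
  unfolding preim_def by blast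

lemma height_one_Qof:
  assumes q: "minprime q" "[:0,1:] \<notin> q"
  shows "Qof q \<in> height_one_primes_mod I"
proof -
  have qp: "tc_prime_ideal q" and nz: "\<exists>y\<in>q. y \<noteq> 0"
    and mn: "\<And>q'. tc_prime_ideal q' \<Longrightarrow> (\<exists>y\<in>q'. y \<noteq> 0) \<Longrightarrow> q' \<subseteq> q \<Longrightarrow> q' = q"
    using q(1) unfolding minprime_def by blast+
  have P: "tc_prime_ideal (Qof q)" using Qof_prime[OF qp q(2)] .
  have sub: "I \<subset> Qof q" using Qof_I[OF tc_prime_idealD(1)[OF qp]] Qof_proper[OF qp q(2)] nz by blast
  have no: "\<not> (\<exists>Q'. tc_prime_ideal Q' \<and> I \<subset> Q' \<and> Q' \<subset> Qof q)"
  proof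
    assume "\<exists>Q'. tc_prime_ideal Q' \<and> I \<subset> Q' \<and> Q' \<subset> Qof q"
    then obtain Q' where Q': "tc_prime_ideal Q'" "I \<subset> Q'" "Q' \<subset> Qof q" by blast
    have wQ: "w \<notin> Q'" using Q'(3) Qof_w[OF qp q(2), of 1] by auto
    have pp: "tc_prime_ideal (preim Q')" using preim_prime[OF Q'(1) wQ] by blast
    have pnz: "\<exists>y\<in>preim Q'. y \<noteq> 0" using preim_nonzero[OF Q'(1) wQ] Q'(2) by blast
    have "preim Q' \<subseteq> preim (Qof q)" using preim_mono Q'(3) by blast
    also have "preim (Qof q) = q" using Qof_psi[OF qp q(2)] unfolding preim_def by blast
    finally have "preim Q' = q" using mn[OF pp pnz] by blast
    then have "Q' = Qof q" using Qof_preim[OF Q'(1) wQ] Q'(2) by blast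
    then show False using Q'(3) by blast
  qed
  show ?thesis unfolding height_one_primes_mod_def using P sub no by blast
qed

lemma height_one_preim:
  assumes Q: "Q \<in> height_one_primes_mod I" "w \<notin> Q"
  shows "minprime (preim Q)" "Qof (preim Q) = Q" "[:0,1:] \<notin> preim Q"
proof -
  have Qp: "tc_prime_ideal Q" "I \<subset> Q" and no: "\<not> (\<exists>Q'. tc_prime_ideal Q' \<and> I \<subset> Q' \<and> Q' \<subset> Q)"
    using Q(1) unfolding height_one_primes_mod_def by blast+
  show eq: "Qof (preim Q) = Q" using Qof_preim[OF Qp(1) Q(2)] Qp(2) by blast
  have pp: "tc_prime_ideal (preim Q)" and X: "[:0,1:] \<notin> preim Q" using preim_prime[OF Qp(1) Q(2)] by blast+
  then show "[:0,1:] \<notin> preim Q" by blast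
  have pnz: "\<exists>y\<in>preim Q. y \<noteq> 0" using preim_nonzero[OF Qp(1) Q(2)] Qp(2) by blast
  have "q' = preim Q" if q': "tc_prime_ideal q'" "\<exists>y\<in>q'. y \<noteq> 0" "q' \<subseteq> preim Q" for q'
  proof -
    have X': "[:0,1:] \<notin> q'" using X q'(3) by blast
    have P': "tc_prime_ideal (Qof q')" using Qof_prime[OF q'(1) X'] .
    obtain y where y: "y \<in> q'" "y \<noteq> 0" using q'(2) by blast
    have s1: "I \<subset> Qof q'" using Qof_I[OF tc_prime_idealD(1)[OF q'(1)]] Qof_proper[OF q'(1) X' y] by blast
    have s2: "Qof q' \<subseteq> Q"
    proof
      fix x assume "x \<in> Qof q'"
      then obtain N g where g: "g \<in> q'" "w ^ N * x - \<psi> g \<in> I" unfolding Qof_def by blast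
      then have "g \<in> preim Q" using q'(3) by blast
      then show "x \<in> Q" using g(2) eq unfolding Qof_def by blast
    qed
    have "Qof q' = Q" using no P' s1 s2 by blast
    then have "preim (Qof q') = preim Q" by simp
    moreover have "preim (Qof q') = q'" using Qof_psi[OF q'(1) X'] unfolding preim_def by blast
    ultimately show ?thesis by simp
  qed
  then show "minprime (preim Q)" unfolding minprime_def using pp pnz by blast
qed

lemma good_Qof:
  assumes q: "minprime q" "[:0,1:] \<notin> q" and u: "has_unif q t"
  shows "good I (Qof q) (\<psi> t)"
proof -
  have qp: "tc_prime_ideal q" and nz: "\<exists>y\<in>q. y \<noteq> 0" using q(1) unfolding minprime_def by blast+
  have P: "tc_prime_ideal (Qof q)" using Qof_prime[OF qp q(2)] .
  have sub: "I \<subseteq> Qof q" "I \<noteq> Qof q" using Qof_I[OF tc_prime_idealD(1)[OF qp]] Qof_proper[OF qp q(2)] nz by blast+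
  have tq: "t \<in> q" and loc: "\<And>y. y \<noteq> 0 \<Longrightarrow> \<exists>e n m. e \<notin> q \<and> m \<notin> q \<and> e * y = t ^ n * m"
    using u unfolding has_unif_def by blast+
  have tQ: "\<psi> t \<in> Qof q" using Qof_psi[OF qp q(2)] tq by blast
  have "\<exists>n. locally_pow I (Qof q) (\<psi> t) x n" if x: "x \<notin> I" for x
  proof -
    obtain N y where h: "w ^ N * x - \<psi> y \<in> I" using cover by blast
    have y0: "y \<noteq> 0"
    proof
      assume "y = 0"
      then have "w ^ N * x \<in> I" using h by (simp add: psi_0)
      then show False using tc_prime_idealD(3)[OF Iprime] w_notin x by blast
    qed
    obtain e n m where em: "e \<notin> q" "m \<notin> q" "e * y = t ^ n * m" using loc[OF y0] by blast
    have "\<psi> e * (w ^ N * x) - \<psi> e * \<psi> y \<in> I" using mI_mult[OF iI h] .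
    moreover have "\<psi> e * \<psi> y = \<psi> m * \<psi> t ^ n" using arg_cong[OF em(3), of \<psi>] by (simp add: psi_mult psi_pow ac_simps)
    ultimately have "(\<psi> e * w ^ N) * x - \<psi> m * \<psi> t ^ n \<in> I" by (simp add: ac_simps)
    moreover have "\<psi> e * w ^ N \<notin> Qof q"
      using tc_prime_idealD(5)[OF P] Qof_psi[OF qp q(2)] em(1) Qof_w[OF qp q(2)] by blast
    moreover have "\<psi> m \<notin> Qof q" using Qof_psi[OF qp q(2)] em(2) by blast
    ultimately show ?thesis unfolding locally_pow_def by blast
  qed
  then show ?thesis unfolding good_def using P Iprime sub tQ by blast
qed

lemma sep_Qof:
  assumes q: "minprime q" "[:0,1:] \<notin> q" and u: "has_unif q t"
    and Q': "Q' \<in> height_one_primes_mod I" "w \<notin> Q'" "\<psi> t \<in> Q'"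
  shows "Q' = Qof q"
proof -
  have "minprime (preim Q')" "Qof (preim Q') = Q'" using height_one_preim[OF Q'(1,2)] by blast+
  moreover have "t \<in> preim Q'" using Q'(3) unfolding preim_def by blast
  ultimately have "preim Q' = q" using u unfolding has_unif_def by blast
  then show ?thesis using \<open>Qof (preim Q') = Q'\<close> by blast
qed

end



section \<open>The ring B = R[u][v] and the ideal I\<close>

definition cst :: "'r::comm_ring_1 \<Rightarrow> 'r poly poly" where "cst r = [:[:r:]:]"
definition psu :: "'r::comm_ring_1 poly \<Rightarrow> 'r poly poly" where "psu y = [:y:]"
definition psv :: "'r::comm_ring_1 poly \<Rightarrow> 'r poly poly" where "psv y = map_poly (\<lambda>r. [:r:]) y"
definition Uu :: "'r::comm_ring_1 poly poly" where "Uu = [:[:0,1:]:]"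
definition Vv :: "'r::comm_ring_1 poly poly" where "Vv = [:0,1:]"
definition Ev :: "'r::comm_ring_1 poly poly \<Rightarrow> 'r poly" where "Ev x = map_poly (\<lambda>c. coeff c 0) x"

lemma const_add: "[:a + b:] = [:a:] + [:b::'a::comm_monoid_add:]"
  by (metis add_pCons add_0_left)

lemma const_sum: "[:sum g A:] = (\<Sum>x\<in>A. [:g x:])"
  by (cases "finite A", induction A rule: finite_induct) (simp_all add: const_add)

lemma coeff_psv: "coeff (psv y) n = [:coeff y n:]"
  unfolding psv_def by (simp add: coeff_map_poly)

lemma psv_add: "psv (x + y) = psv x + psv y"
  by (intro poly_eqI) (simp add: coeff_psv)

lemma psv_mult: "psv (x * y) = psv x * psv y"
  by (intro poly_eqI) (simp add: coeff_psv coeff_mult const_sum const_mult ac_simps)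

lemma psv_1: "psv 1 = 1"
  unfolding psv_def by simp

lemma psu_add: "psu (x + y) = psu x + psu y" unfolding psu_def by simp
lemma psu_mult: "psu (x * y) = psu x * psu y" unfolding psu_def by (simp add: const_mult)
lemma psu_1: "psu 1 = 1" unfolding psu_def by simp

lemma psv_X: "psv [:0,1:] = Vv"
  unfolding psv_def Vv_def by (simp add: map_poly_pCons)

lemma psu_X: "psu [:0,1:] = Uu"
  unfolding psu_def Uu_def by simp

lemma psv_const: "psv [:r:] = cst r"
  unfolding psv_def cst_def by (simp add: map_poly_pCons)

lemma psu_const: "psu [:r:] = cst r"
  unfolding psu_def cst_def by simp

lemma cst_mult: "cst (a * b) = cst a * cst b"
  unfolding cst_def by (simp add: const_mult)

lemma cst_1: "cst 1 = 1" unfolding cst_def by (metis one_pCons)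

lemma cst_pow: "cst (a ^ n) = cst a ^ n"
  by (induction n) (simp_all add: cst_mult cst_1)

lemma cst_prod: "cst (prod g A) = (\<Prod>x\<in>A. cst (g x))"
  by (cases "finite A", induction A rule: finite_induct) (simp_all add: cst_mult cst_1)

lemma uv_minus_eq: "uv_minus f = Uu * Vv - cst f"
  unfolding uv_minus_def Uu_def Vv_def cst_def by simp

lemma X_ideal_eq: "X_ideal f = {uv_minus f * h | h. True}"
  unfolding X_ideal_def by (rule ideal_gen_single)

lemma X_ideal_ideal: "tc_ideal (X_ideal f)"
  unfolding X_ideal_def by (rule ideal_gen_ideal)

lemma UV_cong: "Uu * Vv - cst f \<in> X_ideal f"
  unfolding X_ideal_eq uv_minus_eq by (auto intro: exI[of _ 1])

lemma VU_cong: "Vv * Uu - cst f \<in> X_ideal f"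
  using UV_cong by (simp add: mult.commute)

lemma u_cancel:
  fixes f :: "'r::idom"
  assumes f: "f \<noteq> 0" and z: "Uu * z \<in> X_ideal f"
  shows "z \<in> X_ideal f"
proof -
  obtain h where h: "Uu * z = uv_minus f * h" using z unfolding X_ideal_eq by blast
  have ck: "[:0,1:] * coeff z k = [:-f:] * coeff h k + [:0,1:] * (if k = 0 then 0 else coeff h (k - 1))" for k
  proof -
    have "coeff (Uu * z) k = coeff (uv_minus f * h) k" using h by simp
    then show ?thesis unfolding Uu_def uv_minus_def by (cases k) simp_all
  qed
  have "[:0,1:] dvd coeff h k" for k
  proof -
    have "poly ([:0,1:] * coeff z k) 0 = poly ([:-f:] * coeff h k + [:0,1:] * (if k = 0 then 0 else coeff h (k - 1))) 0"
      using ck[of k] by simp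
    then have "- f * poly (coeff h k) 0 = 0" by simp
    then have "poly (coeff h k) 0 = 0" using f by simp
    then show ?thesis using poly_eq_0_iff_dvd[of "coeff h k" 0] by simp
  qed
  then have "[:[:0,1:]:] dvd h" by (simp add: const_poly_dvd_iff)
  then obtain h' where h': "h = Uu * h'" unfolding Uu_def by (auto elim: dvdE)
  have "Uu * z = Uu * (uv_minus f * h')" using h h' by (simp add: ac_simps)
  moreover have "Uu \<noteq> (0 :: 'r poly poly)" unfolding Uu_def by simp
  ultimately have "z = uv_minus f * h'" by simp
  then show ?thesis unfolding X_ideal_eq by blast
qed

lemma degree_uv_minus: "degree (uv_minus f) = 1"
  unfolding uv_minus_def by simp

lemma coeff_uv_top:
  fixes h :: "'r::idom poly poly"
  shows "coeff (uv_minus f * h) (Suc (degree h)) = [:0,1:] * coeff h (degree h)"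
  unfolding uv_minus_def by (simp add: coeff_eq_0)

lemma inj_u:
  fixes f :: "'r::idom"
  assumes "psu y \<in> X_ideal f" shows "y = 0"
proof -
  obtain h where h: "[:y:] = uv_minus f * h" using assms unfolding X_ideal_eq psu_def by blast
  show ?thesis
  proof (cases "h = 0")
    case True then show ?thesis using h by simp
  next
    case False
    have "coeff [:y:] (Suc (degree h)) = [:0,1:] * coeff h (degree h)" using h coeff_uv_top by metis
    moreover have "coeff h (degree h) \<noteq> 0" using False by simp
    ultimately show ?thesis by simp
  qed
qed

lemma inj_v:
  fixes f :: "'r::idom"
  assumes "psv y \<in> X_ideal f" shows "y = 0"
proof -
  obtain h where h: "psv y = uv_minus f * h" using assms unfolding X_ideal_eq by blast
  show ?thesis
  proof (cases "h = 0")
    case True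
    then have "psv y = 0" using h by simp
    then show ?thesis unfolding psv_def by (simp add: map_poly_eq_0_iff)
  next
    case False
    have "[:coeff y (Suc (degree h)):] = [:0,1:] * coeff h (degree h)"
      using h coeff_uv_top coeff_psv by metis
    moreover have "coeff h (degree h) \<noteq> 0" using False by simp
    ultimately have "degree ([:0,1:] * coeff h (degree h)) = 0" by (metis degree_pCons_0)
    moreover have "degree ([:0,1:] * coeff h (degree h)) = Suc (degree (coeff h (degree h)))"
      using \<open>coeff h (degree h) \<noteq> 0\<close> by (subst degree_mult_eq) simp_all
    ultimately show ?thesis by simp
  qed
qed

lemma cover_gen:
  fixes \<psi> :: "'r::idom poly \<Rightarrow> 'r poly poly" and I :: "'r poly poly set"
  assumes iI: "tc_ideal I"
    and h1: "\<psi> 1 = 1" and hadd: "\<And>x y. \<psi> (x + y) = \<psi> x + \<psi> y" and hmult: "\<And>x y. \<psi> (x * y) = \<psi> x * \<psi> y"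
  defines "S \<equiv> {z. \<exists>N a. \<psi> [:0,1:] ^ N * z - \<psi> a \<in> I}"
  shows "z1 \<in> S \<Longrightarrow> z2 \<in> S \<Longrightarrow> z1 + z2 \<in> S" "z1 \<in> S \<Longrightarrow> z2 \<in> S \<Longrightarrow> z1 * z2 \<in> S"
    "\<psi> a \<in> S"
proof -
  have hpow: "\<psi> (x ^ n) = \<psi> x ^ n" for x n by (induction n) (simp_all add: h1 hmult)
  let ?w = "\<psi> [:0,1:]"
  show "\<psi> a \<in> S" unfolding S_def using mI_refl[OF iI, of "\<psi> a"] by (intro CollectI exI[of _ 0] exI[of _ a]) simp
  assume "z1 \<in> S" "z2 \<in> S"
  then obtain N a1 M a2 where h: "?w ^ N * z1 - \<psi> a1 \<in> I" "?w ^ M * z2 - \<psi> a2 \<in> I" unfolding S_def by blast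
  have A: "?w ^ M * (?w ^ N * z1) - ?w ^ M * \<psi> a1 \<in> I" using mI_mult[OF iI h(1)] .
  have B: "?w ^ N * (?w ^ M * z2) - ?w ^ N * \<psi> a2 \<in> I" using mI_mult[OF iI h(2)] .
  have "(?w ^ M * (?w ^ N * z1) + ?w ^ N * (?w ^ M * z2)) - (?w ^ M * \<psi> a1 + ?w ^ N * \<psi> a2) \<in> I"
    using mI_add2[OF iI A B] .
  moreover have "?w ^ M * (?w ^ N * z1) + ?w ^ N * (?w ^ M * z2) = ?w ^ (N + M) * (z1 + z2)"
    by (simp add: algebra_simps power_add)
  moreover have "?w ^ M * \<psi> a1 + ?w ^ N * \<psi> a2 = \<psi> ([:0,1:] ^ M * a1 + [:0,1:] ^ N * a2)"
    by (simp add: hadd hmult hpow)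
  ultimately show "z1 + z2 \<in> S" unfolding S_def by auto
  have "(?w ^ N * z1) * (?w ^ M * z2) - \<psi> a1 * \<psi> a2 \<in> I" using mI_mult2[OF iI h] .
  moreover have "(?w ^ N * z1) * (?w ^ M * z2) = ?w ^ (N + M) * (z1 * z2)" by (simp add: algebra_simps power_add)
  moreover have "\<psi> a1 * \<psi> a2 = \<psi> (a1 * a2)" by (simp add: hmult)
  ultimately show "z1 * z2 \<in> S" unfolding S_def by auto
qed

lemma cover_u:
  fixes f :: "'r::idom"
  shows "\<exists>N a. psu [:0,1:] ^ N * z - psu a \<in> X_ideal f"
proof -
  define S where "S = {z. \<exists>N a. psu [:0,1:] ^ N * z - psu a \<in> X_ideal f}"
  note cg = cover_gen[OF X_ideal_ideal[of f] psu_1 psu_add psu_mult, folded S_def]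
  have vS: "Vv \<in> S"
  proof -
    have "psu [:0,1:] ^ 1 * Vv - psu [:f:] \<in> X_ideal f" using UV_cong by (simp add: psu_X psu_const)
    then show ?thesis unfolding S_def by blast
  qed
  have "z \<in> S"
  proof (induction z rule: pCons_induct)
    case 0 show ?case using cg(3)[of 0] unfolding psu_def by simp
  next
    case (pCons c z)
    have "pCons c z = psu c + Vv * z" unfolding psu_def Vv_def by simp
    then show ?case using cg(1)[OF cg(3) cg(2)[OF vS pCons.IH]] by simp
  qed
  then show ?thesis unfolding S_def by blast
qed

lemma cover_v:
  fixes f :: "'r::idom"
  shows "\<exists>N a. psv [:0,1:] ^ N * z - psv a \<in> X_ideal f"
proof -
  define S where "S = {z. \<exists>N a. psv [:0,1:] ^ N * z - psv a \<in> X_ideal f}"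
  note cg = cover_gen[OF X_ideal_ideal[of f] psv_1 psv_add psv_mult, folded S_def]
  have uS: "Uu \<in> S"
  proof -
    have "psv [:0,1:] ^ 1 * Uu - psv [:f:] \<in> X_ideal f" using VU_cong by (simp add: psv_X psv_const)
    then show ?thesis unfolding S_def by blast
  qed
  have vS: "Vv \<in> S" using cg(3)[of "[:0,1:]"] by (simp add: psv_X)
  have cS: "[:c:] \<in> S" for c
  proof (induction c rule: pCons_induct)
    case 0 show ?case using cg(3)[of 0] unfolding psv_def by simp
  next
    case (pCons r c)
    have "[:pCons r c:] = psv [:r:] + Uu * [:c:]" unfolding psv_const cst_def Uu_def by simp
    then show ?case using cg(1)[OF cg(3) cg(2)[OF uS pCons.IH]] by simp
  qed
  have "z \<in> S"
  proof (induction z rule: pCons_induct)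
    case 0 show ?case using cS[of 0] by simp
  next
    case (pCons c z)
    have "pCons c z = [:c:] + Vv * z" unfolding Vv_def by simp
    then show ?case using cg(1)[OF cS cg(2)[OF vS pCons.IH]] by simp
  qed
  then show ?thesis unfolding S_def by blast
qed

lemma X_ideal_prime:
  fixes f :: "'r::idom"
  assumes f: "f \<noteq> 0"
  shows "tc_prime_ideal (X_ideal f)"
proof -
  have iI: "tc_ideal (X_ideal f)" by (rule X_ideal_ideal)
  have one: "1 \<notin> X_ideal f" using inj_u[of 1 f] by (auto simp: psu_1)
  have ucan: "Uu ^ N * z \<in> X_ideal f \<Longrightarrow> z \<in> X_ideal f" for N z
    by (induction N) (auto simp: u_cancel[OF f] mult.assoc)
  have "x \<in> X_ideal f \<or> y \<in> X_ideal f" if xy: "x * y \<in> X_ideal f" for x y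
  proof -
    obtain N a where a: "Uu ^ N * x - psu a \<in> X_ideal f" using cover_u[of x f] by (auto simp: psu_X)
    obtain M b where b: "Uu ^ M * y - psu b \<in> X_ideal f" using cover_u[of y f] by (auto simp: psu_X)
    have "(Uu ^ N * x) * (Uu ^ M * y) - psu a * psu b \<in> X_ideal f" using mI_mult2[OF iI a b] .
    moreover have "(Uu ^ N * x) * (Uu ^ M * y) = (Uu ^ N * Uu ^ M) * (x * y)" by (simp add: ac_simps)
    moreover have "(Uu ^ N * Uu ^ M) * (x * y) \<in> X_ideal f" using tc_idealD(3)[OF iI xy] .
    ultimately have "psu a * psu b \<in> X_ideal f"
      using mI_in[OF iI mI_sym[OF iI]] by metis
    then have "psu (a * b) \<in> X_ideal f" by (simp add: psu_mult)
    then have "a * b = 0" using inj_u by blast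
    then have "a = 0 \<or> b = 0" by simp
    then show ?thesis
    proof
      assume "a = 0" then have "Uu ^ N * x \<in> X_ideal f" using a by (simp add: psu_def)
      then show ?thesis using ucan by blast
    next
      assume "b = 0" then have "Uu ^ M * y \<in> X_ideal f" using b by (simp add: psu_def)
      then show ?thesis using ucan by blast
    qed
  qed
  then show ?thesis unfolding tc_prime_ideal_def using iI one by blast
qed

lemma coeff_Ev: "coeff (Ev x) n = coeff (coeff x n) 0"
  unfolding Ev_def by (simp add: coeff_map_poly)

lemma Ev_add: "Ev (x + y) = Ev x + Ev y"
  by (intro poly_eqI) (simp add: coeff_Ev)

lemma Ev_diff: "Ev (x - y) = Ev x - Ev y"
  by (intro poly_eqI) (simp add: coeff_Ev)

lemma Ev_mult: "Ev (x * y) = Ev x * Ev y"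
  by (intro poly_eqI) (simp add: coeff_Ev coeff_mult coeff_sum coeff_mult_0)

lemma Ev_pow: "Ev (x ^ n) = Ev x ^ n"
proof (induction n)
  case 0 show ?case unfolding Ev_def by simp
next
  case (Suc n) then show ?case by (simp add: Ev_mult)
qed

lemma Ev_psv: "Ev (psv g) = g"
  by (intro poly_eqI) (simp add: coeff_Ev coeff_psv)

lemma Ev_Vv: "Ev Vv = [:0,1:]"
  unfolding Vv_def Ev_def by (simp add: map_poly_pCons)

lemma Ev_I:
  fixes f :: "'r::idom"
  assumes "x \<in> X_ideal f" shows "[:f:] dvd Ev x"
proof -
  obtain h where h: "x = uv_minus f * h" using assms unfolding X_ideal_eq by blast
  have "Ev (uv_minus f) = [:- f:]" unfolding uv_minus_def Ev_def by (simp add: map_poly_pCons)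
  then have "Ev x = [:- f:] * Ev h" using h by (simp add: Ev_mult)
  then have "Ev x = [:f:] * (- Ev h)" by simp
  then show ?thesis by (metis dvd_triv_left)
qed

lemma Uu_dvd_Ev:
  fixes x :: "'r::idom poly poly"
  shows "Uu dvd x - psv (Ev x)"
proof -
  have "[:0,1:] dvd coeff (x - psv (Ev x)) n" for n
  proof -
    have "poly (coeff (x - psv (Ev x)) n) 0 = 0"
      by (simp add: coeff_psv coeff_Ev poly_0_coeff_0)
    then have "[:- 0, 1:] dvd coeff (x - psv (Ev x)) n" using poly_eq_0_iff_dvd by blast
    then show ?thesis by simp
  qed
  then show ?thesis unfolding Uu_def by (simp add: const_poly_dvd_iff)
qed



lemma prime_ideal_prod:
  assumes Q: "tc_prime_ideal Q" and A: "finite A"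
  shows "prod g A \<in> Q \<Longrightarrow> \<exists>x\<in>A. g x \<in> Q"
  using A
proof (induction A rule: finite_induct)
  case empty then show ?case using tc_prime_idealD(4)[OF Q] by simp
next
  case (insert x F)
  then have "g x * prod g F \<in> Q" by simp
  then have "g x \<in> Q \<or> prod g F \<in> Q" using tc_prime_idealD(3)[OF Q] by blast
  then show ?case using insert.IH by blast
qed

lemma prime_ideal_pow_in:
  assumes Q: "tc_prime_ideal Q" shows "x ^ n \<in> Q \<Longrightarrow> x \<in> Q"
  using prime_ideal_pow_notin[OF Q] by blast

lemma X_notin_qv:
  assumes "prime_element (p::'r::idom)" shows "[:0,1:] \<notin> qv p"
proof
  assume "[:0,1:] \<in> qv p"
  then have "p dvd coeff [:0,1:] 1" unfolding qv_def by (simp only: mem_Collect_eq const_poly_dvd_iff)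
  then have "p dvd 1" by simp
  then show False using prime_element_not_unit[OF assms] by blast
qed

lemma prime_dvd_prime:
  assumes p: "prime_element (p::'r::idom)" and q: "prime_element q" and d: "p dvd q"
  shows "q dvd p"
proof -
  obtain c where c: "q = p * c" using d by (auto elim: dvdE)
  have "c dvd 1" using prime_element_irred[OF q prime_element_not_unit[OF p] c] .
  then obtain e where e: "1 = c * e" by (auto elim: dvdE)
  have "p = q * e" using c e by (simp add: mult.assoc)
  then show ?thesis by simp
qed

locale Xsetup =
  fixes f :: "'r::idom" and s :: nat and p :: "nat \<Rightarrow> 'r" and a :: "nat \<Rightarrow> nat"
  assumes fd: "factorial_domain TYPE('r)"
    and pprime: "\<And>i. i < s \<Longrightarrow> prime_element (p i)"
    and pna: "\<And>i j. i < s \<Longrightarrow> j < s \<Longrightarrow> i \<noteq> j \<Longrightarrow> \<not> (p i dvd p j \<and> p j dvd p i)"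
    and apos: "\<And>i. i < s \<Longrightarrow> a i > 0"
    and fdef: "f = (\<Prod>i<s. p i ^ a i)"
begin

lemma f0: "f \<noteq> 0"
proof -
  have "\<forall>i\<in>{..<s}. p i ^ a i \<noteq> 0"
  proof
    fix i assume "i \<in> {..<s}"
    then have "p i \<noteq> 0" using prime_element_nz[OF pprime[of i]] by simp
    then show "p i ^ a i \<noteq> 0" by simp
  qed
  then show ?thesis unfolding fdef by (simp add: prod_zero_iff)
qed

lemma Iprime: "tc_prime_ideal (X_ideal f)" using X_ideal_prime[OF f0] .

lemma iI: "tc_ideal (X_ideal f)" using X_ideal_ideal .

sublocale U: wsetup psu "X_ideal f"
  by unfold_locales (simp_all add: psu_1 psu_add psu_mult Iprime inj_u cover_u)

sublocale V: wsetup psv "X_ideal f"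
  by unfold_locales (simp_all add: psv_1 psv_add psv_mult Iprime inj_v cover_v)

definition K :: "nat \<Rightarrow> 'r poly poly set" where
  "K i = V.Qof (qv (p i))"

lemma K_H1: "i < s \<Longrightarrow> K i \<in> height_one_primes_mod (X_ideal f)"
  unfolding K_def using V.height_one_Qof minprime_qv[OF fd pprime] X_notin_qv[OF pprime] by blast

lemma K_good: "i < s \<Longrightarrow> good (X_ideal f) (K i) (cst (p i))"
  unfolding K_def
  using V.good_Qof[OF minprime_qv[OF fd pprime] X_notin_qv[OF pprime] unif_qv[OF fd pprime]]
  by (simp add: psv_const)

lemma K_prime: "i < s \<Longrightarrow> tc_prime_ideal (K i)"
  unfolding K_def using V.Qof_prime qv_prime[OF pprime] X_notin_qv[OF pprime] by blast

lemma K_cst: "i < s \<Longrightarrow> cst r \<in> K i \<longleftrightarrow> p i dvd r"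
  unfolding K_def using V.Qof_psi[OF qv_prime[OF pprime] X_notin_qv[OF pprime], of i "[:r:]"]
  by (simp add: psv_const qv_def const_poly_dvd_const_poly_iff)

lemma K_v: "i < s \<Longrightarrow> Vv \<notin> K i"
  unfolding K_def using V.Qof_w[OF qv_prime[OF pprime] X_notin_qv[OF pprime], of i 1]
  by (simp add: psv_X)

lemma p_dvd_f: "i < s \<Longrightarrow> p i dvd f"
proof -
  assume i: "i < s"
  have "p i dvd p i ^ a i" using apos[OF i] by (simp add: dvd_power)
  also have "\<dots> dvd f" unfolding fdef using i by (intro dvd_prodI) auto
  finally show ?thesis .
qed

lemma K_u: "i < s \<Longrightarrow> Uu \<in> K i"
proof -
  assume i: "i < s"
  have "psv [:0,1:] ^ 1 * Uu - psv [:f:] \<in> X_ideal f" using VU_cong by (simp add: psv_X psv_const)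
  moreover have "[:f:] \<in> qv (p i)" using p_dvd_f[OF i] by (simp add: qv_def const_poly_dvd_const_poly_iff)
  ultimately show ?thesis unfolding K_def V.Qof_def by blast
qed

lemma K_inj: "i < s \<Longrightarrow> j < s \<Longrightarrow> K i = K j \<Longrightarrow> i = j"
proof (rule ccontr)
  assume ij: "i < s" "j < s" "K i = K j" "i \<noteq> j"
  have "cst (p i) \<in> K i" using K_cst[OF ij(1)] by simp
  then have "p j dvd p i" using K_cst[OF ij(2)] ij(3) by simp
  moreover have "cst (p j) \<in> K j" using K_cst[OF ij(2)] by simp
  then have "p i dvd p j" using K_cst[OF ij(1)] ij(3) by simp
  ultimately show False using pna[OF ij(1,2,4)] by blast
qed

lemma classify:
  assumes Q: "Q \<in> height_one_primes_mod (X_ideal f)"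
  shows "Uu \<notin> Q \<or> (\<exists>i<s. Q = K i)"
proof (cases "Uu \<in> Q")
  case False then show ?thesis by blast
next
  case True
  then have uQ: "Uu \<in> Q" by simp
  have Qp: "tc_prime_ideal Q" "X_ideal f \<subset> Q" and no: "\<not> (\<exists>Q'. tc_prime_ideal Q' \<and> X_ideal f \<subset> Q' \<and> Q' \<subset> Q)"
    using Q unfolding height_one_primes_mod_def by blast+
  have iQ: "tc_ideal Q" using tc_prime_idealD(1)[OF Qp(1)] .
  have "Uu * Vv \<in> Q" using tc_idealD(4)[OF iQ uQ] .
  then have "cst f \<in> Q" using mI_in_P[OF iQ _ mI_sym[OF iI UV_cong]] Qp(2) by blast
  then have "(\<Prod>i<s. cst (p i) ^ a i) \<in> Q" unfolding fdef by (simp add: cst_prod cst_pow)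
  then obtain i where i: "i < s" "cst (p i) ^ a i \<in> Q" using prime_ideal_prod[OF Qp(1)] by blast
  have piQ: "cst (p i) \<in> Q" using prime_ideal_pow_in[OF Qp(1) i(2)] .
  have pp: "prime_element (p i)" using pprime[OF i(1)] .
  have sub: "K i \<subseteq> Q"
  proof
    fix x assume "x \<in> K i"
    then obtain N g where g: "g \<in> qv (p i)" "Vv ^ N * x - psv g \<in> X_ideal f"
      unfolding K_def V.Qof_def by (auto simp: psv_X)
    have "[:f:] dvd Ev (Vv ^ N * x - psv g)" using Ev_I[OF g(2)] .
    then have "[:p i:] dvd Ev (Vv ^ N * x - psv g)"
      using p_dvd_f[OF i(1)] dvd_trans by (metis const_poly_dvd_const_poly_iff)
    then have "[:p i:] dvd [:0,1:] ^ N * Ev x - g" by (simp add: Ev_diff Ev_mult Ev_pow Ev_Vv Ev_psv)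
    moreover have "[:p i:] dvd g" using g(1) unfolding qv_def by blast
    ultimately have "[:p i:] dvd ([:0,1:] ^ N * Ev x - g) + g" by (rule dvd_add)
    then have "[:0,1:] ^ N * Ev x \<in> qv (p i)" unfolding qv_def by simp
    moreover have "[:0,1:] ^ N \<notin> qv (p i)" using prime_ideal_pow_notin[OF qv_prime[OF pp] X_notin_qv[OF pp]] .
    ultimately have "Ev x \<in> qv (p i)" using tc_prime_idealD(3)[OF qv_prime[OF pp]] by blast
    then obtain g' where g': "Ev x = [:p i:] * g'" unfolding qv_def by (auto elim: dvdE)
    obtain h where h: "x - psv (Ev x) = Uu * h" using Uu_dvd_Ev[of x] by (auto elim: dvdE)
    have "x = (x - psv (Ev x)) + psv (Ev x)" by simp
    also have "\<dots> = Uu * h + cst (p i) * psv g'" unfolding h by (simp only: g' psv_mult psv_const)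
    finally have "x = Uu * h + cst (p i) * psv g'" .
    moreover have "Uu * h \<in> Q" using tc_idealD(4)[OF iQ uQ] .
    moreover have "cst (p i) * psv g' \<in> Q" using tc_idealD(4)[OF iQ piQ] .
    ultimately show "x \<in> Q" using tc_idealD(2)[OF iQ] by metis
  qed
  have Kp: "tc_prime_ideal (K i)" "X_ideal f \<subset> K i"
    using K_H1[OF i(1)] unfolding height_one_primes_mod_def by blast+
  have "K i = Q" using no Kp sub by blast
  then show ?thesis using i(1) by blast
qed

lemma U_w: "psu [:0,1:] = Uu" by (rule psu_X)

lemma all_good_I: "all_good (X_ideal f)"
  unfolding all_good_def
proof (intro conjI ballI)
  show "tc_prime_ideal (X_ideal f)" by (rule Iprime)
  fix Q assume Q: "Q \<in> height_one_primes_mod (X_ideal f)"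
  from classify[OF Q] show "\<exists>t. good (X_ideal f) Q t"
  proof
    assume u: "Uu \<notin> Q"
    then have u': "psu [:0,1:] \<notin> Q" by (simp add: psu_X)
    have m: "minprime (U.preim Q)" "U.Qof (U.preim Q) = Q" "[:0,1:] \<notin> U.preim Q"
      using U.height_one_preim[OF Q u'] by blast+
    obtain t where "has_unif (U.preim Q) t" using minprime_unif[OF fd m(1)] by blast
    then have "good (X_ideal f) (U.Qof (U.preim Q)) (psu t)" using U.good_Qof m by blast
    then show ?thesis using m(2) by auto
  next
    assume "\<exists>i<s. Q = K i"
    then show ?thesis using K_good by blast
  qed
qed

end



lemma qv_assoc:
  assumes "p dvd q" "q dvd (p::'r::idom)" shows "qv p = qv q"
proof -
  have "[:p:] dvd y \<longleftrightarrow> [:q:] dvd y" for y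
    using assms by (meson const_poly_dvd_const_poly_iff dvd_trans)
  then show ?thesis unfolding qv_def by blast
qed

lemma fin_minprimes:
  assumes fd: "factorial_domain TYPE('r::idom)" and al: "(\<alpha>::'r poly) \<noteq> 0"
  shows "finite {q. minprime q \<and> \<alpha> \<in> q}"
proof -
  have "lead_coeff \<alpha> \<noteq> 0" using al by simp
  then obtain ps u where h: "u dvd 1" "\<forall>p\<in>set ps. prime_element p" "lead_coeff \<alpha> = u * prod_list ps"
    using fd_factor[OF fd] by blast
  have "{q. minprime q \<and> \<alpha> \<in> q} \<subseteq> qv ` set ps \<union> qh ` prime_factors (fract_poly \<alpha>)"
  proof
    fix q assume q: "q \<in> {q. minprime q \<and> \<alpha> \<in> q}"
    then have mq: "minprime q" and aq: "\<alpha> \<in> q" by auto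
    from minprime_cases[OF fd mq] show "q \<in> qv ` set ps \<union> qh ` prime_factors (fract_poly \<alpha>)"
    proof
      assume "\<exists>p. prime_element p \<and> q = qv p"
      then obtain p where p: "prime_element p" "q = qv p" by blast
      then have "[:p:] dvd \<alpha>" using aq unfolding qv_def by blast
      then have "p dvd lead_coeff \<alpha>" by (simp add: const_poly_dvd_iff)
      then have "p dvd u * prod_list ps" using h(3) by simp
      moreover have "\<not> p dvd u"
      proof
        assume "p dvd u" then have "p dvd 1" using h(1) dvd_trans by blast
        then show False using p(1) prime_element_not_unit by blast
      qed
      ultimately have "p dvd prod_list ps" using prime_element_dvd_multD[OF p(1)] by blast
      then obtain r where r: "r \<in> set ps" "p dvd r" using prime_element_dvd_prod_list_ex[OF p(1)] by blast
      have "r dvd p" using prime_dvd_prime[OF p(1) _ r(2)] h(2) r(1) by blast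
      then have "q = qv r" using qv_assoc[OF r(2)] p(2) by simp
      then show ?thesis using r(1) by blast
    next
      assume "\<exists>P. prime_elem P \<and> q = qh P"
      then obtain P where P: "prime_elem P" "q = qh P" by blast
      have "P dvd fract_poly \<alpha>" using aq P(2) unfolding qh_def by blast
      then have "normalize P \<in> prime_factors (fract_poly \<alpha>)"
        using al P(1) by (simp add: in_prime_factors_iff)
      moreover have "qh P = qh (normalize P)"
      proof -
        have n1: "prime_elem (normalize P)" using P(1) by simp
        have n2: "P dvd normalize P" by simp
        show ?thesis using qh_assoc[OF P(1) n1 n2] .
      qed
      ultimately show ?thesis using P(2) by blast
    qed
  qed
  moreover have "finite (qv ` set ps \<union> qh ` prime_factors (fract_poly \<alpha>))" by simp
  ultimately show ?thesis by (rule finite_subset)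
qed

lemma prime_element_dvd_prod:
  assumes p: "prime_element (p::'r::idom)" and A: "finite A"
  shows "p dvd prod g A \<Longrightarrow> \<exists>x\<in>A. p dvd g x"
  using A
proof (induction A rule: finite_induct)
  case empty then show ?case using prime_element_not_unit[OF p] by simp
next
  case (insert x F)
  then have "p dvd g x * prod g F" by simp
  then show ?case using prime_element_dvd_multD[OF p] insert.IH by blast
qed

lemma prime_element_dvd_power:
  assumes p: "prime_element (p::'r::idom)"
  shows "p dvd x ^ n \<Longrightarrow> p dvd x"
proof (induction n)
  case 0 then show ?case using prime_element_not_unit[OF p] by simp
next
  case (Suc n) then show ?case using prime_element_dvd_multD[OF p] by auto
qed

context Xsetup
begin

abbreviation "II \<equiv> X_ideal f"
abbreviation "H1 \<equiv> height_one_primes_mod (X_ideal f)"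

lemma U_cover: "\<exists>N \<alpha>. Uu ^ N * x - psu \<alpha> \<in> II"
  using U.cover[of x] by (simp add: psu_X)

lemma Uu_notin_I: "Uu ^ N \<notin> II"
  using U.w_notin by (simp add: psu_X)

lemma div_finite:
  assumes x: "x \<notin> II"
  shows "finite {P. div_mod II x P \<noteq> 0}"
proof -
  obtain N \<alpha> where h: "Uu ^ N * x - psu \<alpha> \<in> II" using U_cover by blast
  have al: "\<alpha> \<noteq> 0"
  proof
    assume "\<alpha> = 0"
    then have "Uu ^ N * x \<in> II" using h by (simp add: psu_def)
    then show False using tc_prime_idealD(3)[OF Iprime] Uu_notin_I x by blast
  qed
  have "{P. div_mod II x P \<noteq> 0} \<subseteq> K ` {..<s} \<union> U.Qof ` {q. minprime q \<and> \<alpha> \<in> q}"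
  proof
    fix P assume "P \<in> {P. div_mod II x P \<noteq> 0}"
    then have xP: "x \<in> P" and P: "P \<in> H1" using div_mod_nonzero[OF all_good_I] by blast+
    from classify[OF P] show "P \<in> K ` {..<s} \<union> U.Qof ` {q. minprime q \<and> \<alpha> \<in> q}"
    proof
      assume u: "Uu \<notin> P"
      then have u': "psu [:0,1:] \<notin> P" by (simp add: psu_X)
      have m: "minprime (U.preim P)" "U.Qof (U.preim P) = P"
        using U.height_one_preim[OF P u'] by blast+
      have Pp: "tc_prime_ideal P" "II \<subseteq> P" using P unfolding height_one_primes_mod_def by blast+
      have iP: "tc_ideal P" using tc_prime_idealD(1)[OF Pp(1)] .
      have "Uu ^ N * x \<in> P" using tc_idealD(3)[OF iP xP] .
      then have "psu \<alpha> \<in> P" using mI_in_P[OF iP Pp(2) mI_sym[OF iI h]] by blast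
      then have "\<alpha> \<in> U.preim P" unfolding U.preim_def by simp
      then show ?thesis using m by blast
    next
      assume "\<exists>i<s. P = K i" then show ?thesis by blast
    qed
  qed
  moreover have "finite (K ` {..<s} \<union> U.Qof ` {q. minprime q \<and> \<alpha> \<in> q})"
    using fin_minprimes[OF fd al] by simp
  ultimately show ?thesis by (rule finite_subset)
qed

lemma div_carrier:
  assumes "x \<notin> II" shows "div_mod II x \<in> carrier (weil_divisors_mod II)"
  unfolding weil_divisors_mod_def using div_finite[OF assms] div_mod_nonzero(2)[OF all_good_I]
  by auto

lemma f_split: "j < s \<Longrightarrow> f = p j ^ a j * (\<Prod>i\<in>{..<s} - {j}. p i ^ a i)"
  unfolding fdef by (subst prod.remove[of "{..<s}" j]) auto

lemma e_notin: "j < s \<Longrightarrow> \<not> p j dvd (\<Prod>i\<in>{..<s} - {j}. p i ^ a i)"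
proof
  assume j: "j < s" and d: "p j dvd (\<Prod>i\<in>{..<s} - {j}. p i ^ a i)"
  obtain i where i: "i \<in> {..<s} - {j}" "p j dvd p i ^ a i" using prime_element_dvd_prod[OF pprime[OF j] _ d] by blast
  have "p j dvd p i" using prime_element_dvd_power[OF pprime[OF j] i(2)] .
  moreover have "p i dvd p j" using prime_dvd_prime[OF pprime[OF j] pprime _ ] calculation i(1) by blast
  ultimately show False using pna[OF j, of i] i(1) by blast
qed

lemma div_u_K: "j < s \<Longrightarrow> div_mod II Uu (K j) = int (a j)"
proof -
  assume j: "j < s"
  define e where "e = (\<Prod>i\<in>{..<s} - {j}. p i ^ a i)"
  have "Vv * Uu - cst f \<in> II" using VU_cong .
  moreover have "cst f = cst e * cst (p j) ^ a j" unfolding e_def using f_split[OF j]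
    by (simp add: cst_mult cst_pow mult.commute)
  ultimately have "Vv * Uu - cst e * cst (p j) ^ a j \<in> II" by simp
  moreover have "Vv \<notin> K j" using K_v[OF j] .
  moreover have "cst e \<notin> K j" using K_cst[OF j] e_notin[OF j] unfolding e_def by simp
  ultimately have "locally_pow II (K j) (cst (p j)) Uu (a j)" unfolding locally_pow_def by blast
  moreover have "Uu \<notin> II" using Uu_notin_I[of 1] by simp
  ultimately show ?thesis using valuation_good[OF K_good[OF j]] K_H1[OF j] unfolding div_mod_def by simp
qed

lemma div_u_other: "P \<in> H1 \<Longrightarrow> Uu \<notin> P \<Longrightarrow> div_mod II Uu P = 0"
  using div_mod_notin[OF all_good_I] by blast

lemma gen_at:
  assumes Q: "Q \<in> H1" "Uu \<notin> Q"
  shows "\<exists>g. g \<notin> II \<and> div_mod II g Q = 1 \<and> (\<forall>Q'\<in>H1. Uu \<notin> Q' \<longrightarrow> Q' \<noteq> Q \<longrightarrow> div_mod II g Q' = 0)"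
proof -
  have u': "psu [:0,1:] \<notin> Q" using Q(2) by (simp add: psu_X)
  have m: "minprime (U.preim Q)" "U.Qof (U.preim Q) = Q" "[:0,1:] \<notin> U.preim Q"
    using U.height_one_preim[OF Q(1) u'] by blast+
  obtain t where t: "has_unif (U.preim Q) t" using minprime_unif[OF fd m(1)] by blast
  have g: "good II Q (psu t)" using U.good_Qof[OF m(1,3) t] m(2) by simp
  have tI: "psu t \<notin> II" using good_t_notin[OF g] .
  have "locally_pow II Q (psu t) (psu t) 1"
    unfolding locally_pow_def using tc_prime_idealD(4) g mI_refl[OF iI] unfolding good_def
    by (intro exI[of _ 1] exI[of _ 1]) auto
  then have "div_mod II (psu t) Q = 1" using valuation_good[OF g _ tI] Q(1) unfolding div_mod_def by simp
  moreover have "div_mod II (psu t) Q' = 0" if Q': "Q' \<in> H1" "Uu \<notin> Q'" "Q' \<noteq> Q" for Q'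
  proof -
    have "psu t \<notin> Q'"
    proof
      assume "psu t \<in> Q'"
      then have "Q' = U.Qof (U.preim Q)" using U.sep_Qof[OF m(1,3) t Q'(1)] Q'(2) by (simp add: psu_X)
      then show False using m(2) Q'(3) by simp
    qed
    then show ?thesis using div_mod_notin[OF all_good_I] by blast
  qed
  ultimately show ?thesis using tI by blast
qed

end



lemma fract_X: "fract_poly [:0, 1::'r::idom:] = [:0, 1:]"
  by (simp add: fract_poly_pCons)

lemma Xf_prime: "prime_elem (fract_poly [:0, 1::'r::idom:])"
  unfolding fract_X by (rule prime_elem_linear_field_poly) simp

lemma psu_smult: "psu (smult r y) = cst r * psu y"
proof -
  have "smult r y = [:r:] * y" by simp
  then show ?thesis by (simp only: psu_mult psu_const)
qed

lemma psu_pow: "psu (y ^ n) = psu y ^ n"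
  by (induction n) (simp_all add: psu_1 psu_mult)

context Xsetup
begin

lemma psu_notin: "y \<noteq> 0 \<Longrightarrow> psu y \<notin> II"
  using inj_u by blast

lemma cst_notin: "r \<noteq> 0 \<Longrightarrow> cst r \<notin> II"
  using psu_notin[of "[:r:]"] by (simp add: psu_const)

lemma rep_nonzero:
  assumes x: "x \<notin> II" and h: "Uu ^ N * x - psu \<alpha> \<in> II"
  shows "\<alpha> \<noteq> 0"
proof
  assume "\<alpha> = 0"
  then have "Uu ^ N * x \<in> II" using h by (simp add: psu_def)
  then show False using tc_prime_idealD(3)[OF Iprime] Uu_notin_I x by blast
qed

lemma notin_mult: "y \<notin> II \<Longrightarrow> z \<notin> II \<Longrightarrow> y * z \<notin> II"
  using tc_prime_idealD(5)[OF Iprime] by blast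

lemma div_rep:
  assumes x: "x \<notin> II" and h: "Uu ^ N * x - psu \<alpha> \<in> II"
  shows "div_mod II (psu \<alpha>) P = int N * div_mod II Uu P + div_mod II x P"
proof -
  have uN: "Uu ^ N \<notin> II" using Uu_notin_I .
  have u: "Uu \<notin> II" using Uu_notin_I[of 1] by simp
  have "div_mod II (psu \<alpha>) P = div_mod II (Uu ^ N * x) P"
    using div_mod_cong[OF all_good_I notin_mult[OF uN x] h] .
  also have "\<dots> = div_mod II (Uu ^ N) P + div_mod II x P" using div_mod_mult[OF all_good_I uN x] .
  also have "div_mod II (Uu ^ N) P = int N * div_mod II Uu P" using div_mod_pow(1)[OF all_good_I u] .
  finally show ?thesis .
qed

lemma Qv_props:
  assumes q: "minprime q" "[:0,1:] \<notin> q"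
  shows "U.Qof q \<in> H1" "Uu \<notin> U.Qof q"
  using U.height_one_Qof[OF q] U.Qof_w[OF _ q(2), of 1] q(1) unfolding minprime_def
  by (auto simp: psu_X)

lemma mult_val:
  assumes P: "prime_elem P" "\<not> P dvd fract_poly [:0,1:]" and y: "y \<noteq> 0"
  shows "div_mod II (psu y) (U.Qof (qh P)) = int (multiplicity P (fract_poly y))"
proof -
  have X: "[:0,1:] \<notin> qh P" using P(2) unfolding qh_def by simp
  have mq: "minprime (qh P)" using minprime_qh[OF P(1)] .
  obtain t \<kappa> where t: "\<kappa> \<noteq> 0" "fract_poly t = smult \<kappa> P" "has_unif (qh P) t"
    using unif_qh[OF fd P(1)] by blast
  have g: "good II (U.Qof (qh P)) (psu t)" using U.good_Qof[OF mq X t(3)] .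
  obtain e n m where em: "e \<notin> qh P" "m \<notin> qh P" "e * y = t ^ n * m"
    using t(3) y unfolding has_unif_def by blast
  have qp: "tc_prime_ideal (qh P)" using qh_prime[OF P(1)] .
  have "psu e * psu y - psu m * psu t ^ n = 0"
    using arg_cong[OF em(3), of psu] by (simp add: psu_mult psu_pow ac_simps)
  then have "psu e * psu y - psu m * psu t ^ n \<in> II" using tc_idealD(1)[OF iI] by simp
  moreover have "psu e \<notin> U.Qof (qh P)" "psu m \<notin> U.Qof (qh P)"
    using U.Qof_psi[OF qp X] em(1,2) by blast+
  ultimately have "locally_pow II (U.Qof (qh P)) (psu t) (psu y) n" unfolding locally_pow_def by blast
  then have "valuation_mod II (U.Qof (qh P)) (psu y) = int n" using valuation_good[OF g _ psu_notin[OF y]] by simp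
  moreover have "multiplicity P (fract_poly y) = n" using unif_qh_mult[OF P(1) t(1,2) em y] .
  ultimately show ?thesis using Qv_props(1)[OF mq X] unfolding div_mod_def by simp
qed

lemma cst_val:
  assumes j: "j < s" and r: "r \<noteq> 0"
  shows "div_mod II (cst r) (U.Qof (qv (p j))) = div_mod II (cst r) (K j)"
proof -
  have pp: "prime_element (p j)" using pprime[OF j] .
  obtain n r' where h: "r = p j ^ n * r'" "\<not> p j dvd r'" using ord_decomp[OF fd pp r] by blast
  have X: "[:0,1:] \<notin> qv (p j)" using X_notin_qv[OF pp] .
  have mq: "minprime (qv (p j))" using minprime_qv[OF fd pp] .
  have qp: "tc_prime_ideal (qv (p j))" using qv_prime[OF pp] .
  have eq: "1 * cst r - cst r' * cst (p j) ^ n \<in> II"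
    using h(1) tc_idealD(1)[OF iI] by (simp add: cst_mult cst_pow ac_simps)
  have gU: "good II (U.Qof (qv (p j))) (cst (p j))"
    using U.good_Qof[OF mq X unif_qv[OF fd pp]] by (simp add: psu_const)
  have "1 \<notin> U.Qof (qv (p j))" using tc_prime_idealD(4)[OF U.Qof_prime[OF qp X]] .
  moreover have "cst r' \<notin> U.Qof (qv (p j))"
    using U.Qof_psi[OF qp X, of "[:r':]"] h(2) by (simp add: psu_const qv_def const_poly_dvd_const_poly_iff)
  ultimately have lU: "locally_pow II (U.Qof (qv (p j))) (cst (p j)) (cst r) n"
    unfolding locally_pow_def using eq by blast
  have "1 \<notin> K j" using tc_prime_idealD(4)[OF K_prime[OF j]] .
  moreover have "cst r' \<notin> K j" using K_cst[OF j] h(2) by simp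
  ultimately have lK: "locally_pow II (K j) (cst (p j)) (cst r) n"
    unfolding locally_pow_def using eq by blast
  have "div_mod II (cst r) (U.Qof (qv (p j))) = int n"
    using valuation_good[OF gU lU cst_notin[OF r]] Qv_props(1)[OF mq X] unfolding div_mod_def by simp
  moreover have "div_mod II (cst r) (K j) = int n"
    using valuation_good[OF K_good[OF j] lK cst_notin[OF r]] K_H1[OF j] unfolding div_mod_def by simp
  ultimately show ?thesis by simp
qed

lemma compare:
  assumes x: "x \<notin> II" and y: "y \<notin> II"
    and eq: "\<forall>Q\<in>H1. Uu \<notin> Q \<longrightarrow> div_mod II x Q = div_mod II y Q"
  shows "\<exists>k::int. \<forall>j<s. div_mod II x (K j) - div_mod II y (K j) = k * int (a j)"
proof -
  obtain N \<alpha> where hx: "Uu ^ N * x - psu \<alpha> \<in> II" using U_cover by blast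
  obtain M \<beta> where hy: "Uu ^ M * y - psu \<beta> \<in> II" using U_cover by blast
  have al: "\<alpha> \<noteq> 0" using rep_nonzero[OF x hx] .
  have be: "\<beta> \<noteq> 0" using rep_nonzero[OF y hy] .
  have S1: "div_mod II (psu \<alpha>) (U.Qof q) = div_mod II (psu \<beta>) (U.Qof q)"
    if q: "minprime q" "[:0,1:] \<notin> q" for q
  proof -
    have "div_mod II Uu (U.Qof q) = 0" using div_u_other Qv_props[OF q] by blast
    then show ?thesis using div_rep[OF x hx] div_rep[OF y hy] eq Qv_props[OF q] by simp
  qed
  define Xf where "Xf = fract_poly [:0, 1::'r:]"
  have Xp: "prime_elem Xf" unfolding Xf_def by (rule Xf_prime)
  have Xnz: "Xf \<noteq> 0" using Xp by auto
  have Xnu: "\<not> is_unit Xf" using Xp prime_elem_not_unit by blast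
  have S2: "multiplicity P (fract_poly \<alpha>) = multiplicity P (fract_poly \<beta>)"
    if P: "prime_elem P" "\<not> P dvd Xf" for P
  proof -
    have X: "[:0,1:] \<notin> qh P" using P(2) unfolding qh_def Xf_def by simp
    have "int (multiplicity P (fract_poly \<alpha>)) = int (multiplicity P (fract_poly \<beta>))"
      using mult_val[OF P(1) _ al] mult_val[OF P(1) _ be] S1[OF minprime_qh[OF P(1)] X] P(2)
      unfolding Xf_def by simp
    then show ?thesis by simp
  qed
  define k1 where "k1 = multiplicity Xf (fract_poly \<alpha>)"
  define k2 where "k2 = multiplicity Xf (fract_poly \<beta>)"
  define A' where "A' = \<alpha> * [:0,1:] ^ k2"
  define B' where "B' = \<beta> * [:0,1:] ^ k1"
  have fA: "fract_poly A' = fract_poly \<alpha> * Xf ^ k2" unfolding A'_def Xf_def by (simp add: fract_poly_power)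
  have fB: "fract_poly B' = fract_poly \<beta> * Xf ^ k1" unfolding B'_def Xf_def by (simp add: fract_poly_power)
  have fa0: "fract_poly \<alpha> \<noteq> 0" using al by simp
  have fb0: "fract_poly \<beta> \<noteq> 0" using be by simp
  have A0: "fract_poly A' \<noteq> 0" using fA fa0 Xnz by simp
  have B0: "fract_poly B' \<noteq> 0" using fB fb0 Xnz by simp
  have mults: "multiplicity P (fract_poly A') = multiplicity P (fract_poly B')" if P: "prime P" for P
  proof -
    have Pe: "prime_elem P" using P by blast
    have mA: "multiplicity P (fract_poly A') = multiplicity P (fract_poly \<alpha>) + k2 * multiplicity P Xf"
      unfolding fA using prime_elem_multiplicity_mult_distrib[OF Pe fa0] prime_elem_multiplicity_power_distrib[OF Pe Xnz] Xnz
      by simp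
    have mB: "multiplicity P (fract_poly B') = multiplicity P (fract_poly \<beta>) + k1 * multiplicity P Xf"
      unfolding fB using prime_elem_multiplicity_mult_distrib[OF Pe fb0] prime_elem_multiplicity_power_distrib[OF Pe Xnz] Xnz
      by simp
    show ?thesis
    proof (cases "P dvd Xf")
      case False
      then have "multiplicity P Xf = 0" by (rule not_dvd_imp_multiplicity_0)
      then show ?thesis using mA mB S2[OF Pe False] by simp
    next
      case True
      then obtain c where c: "Xf = P * c" by (auto elim: dvdE)
      have cu: "is_unit c" using irreducibleD[OF prime_elem_imp_irreducible[OF Xp] c] Pe prime_elem_not_unit by blast
      have sw: "multiplicity Xf z = multiplicity P z" for z
        unfolding c using multiplicity_times_unit_left[OF cu, of P z] by (simp add: mult.commute)
      have "multiplicity P Xf = 1" using sw[of Xf] multiplicity_self[OF Xnz Xnu] by simp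
      then show ?thesis using mA mB sw unfolding k1_def k2_def by simp
    qed
  qed
  have "normalize (fract_poly A') = normalize (fract_poly B')"
    using multiplicity_eq_imp_eq[OF A0 B0 mults] .
  then have d1: "fract_poly B' dvd fract_poly A'" using associatedD2 by blast
  then obtain c where c: "fract_poly A' = fract_poly B' * c" by (auto elim: dvdE)
  have c0: "c \<noteq> 0" using c A0 by auto
  have "degree (fract_poly A') = degree (fract_poly B') + degree c" using c degree_mult_eq[OF B0 c0] by simp
  moreover have dA: "fract_poly A' dvd fract_poly B'" using \<open>normalize _ = _\<close> associatedD1 by blast
  have "degree (fract_poly A') \<le> degree (fract_poly B')" by (rule dvd_imp_degree_le[OF dA B0])
  ultimately have "degree c = 0" by simp
  then obtain \<gamma> where \<gamma>: "c = [:\<gamma>:]" by (metis degree_0_id)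
  have g0: "\<gamma> \<noteq> 0" using c0 \<gamma> by simp
  obtain r1 r2 where r: "\<gamma> = Fract r1 r2" "r2 \<noteq> 0" by (cases \<gamma>) blast
  have r1: "r1 \<noteq> 0"
  proof
    assume "r1 = 0"
    then have "\<gamma> = 0" using r by (simp add: Fract_conv_to_fract)
    then show False using g0 by simp
  qed
  have "fract_poly A' = smult (to_fract r1 / to_fract r2) (fract_poly B')"
    using c \<gamma> r by (simp add: Fract_conv_to_fract mult.commute)
  then have "smult (to_fract r2) (fract_poly A') = smult (to_fract r1) (fract_poly B')"
    using r(2) by simp
  then have "fract_poly (smult r2 A') = fract_poly (smult r1 B')" by simp
  then have AB: "smult r2 A' = smult r1 B'" by (simp only: fract_poly_eq_iff)
  have pA: "psu (smult r2 A') = cst r2 * (psu \<alpha> * Uu ^ k2)"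
    unfolding A'_def psu_smult psu_mult psu_pow psu_X ..
  have pB: "psu (smult r1 B') = cst r1 * (psu \<beta> * Uu ^ k1)"
    unfolding B'_def psu_smult psu_mult psu_pow psu_X ..
  have AB': "cst r2 * (psu \<alpha> * Uu ^ k2) = cst r1 * (psu \<beta> * Uu ^ k1)"
    using AB pA pB by metis
  have r1I: "cst r1 \<notin> II" using cst_notin[OF r1] .
  have r2I: "cst r2 \<notin> II" using cst_notin[OF r(2)] .
  have aI: "psu \<alpha> \<notin> II" using psu_notin[OF al] .
  have bI: "psu \<beta> \<notin> II" using psu_notin[OF be] .
  have u: "Uu \<notin> II" using Uu_notin_I[of 1] by simp
  have expand: "div_mod II (cst r * (psu z * Uu ^ k)) P =
      div_mod II (cst r) P + div_mod II (psu z) P + int k * div_mod II Uu P"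
    if "r \<noteq> 0" "psu z \<notin> II" for r z k P
    using div_mod_mult[OF all_good_I cst_notin[OF that(1)] notin_mult[OF that(2) Uu_notin_I]]
      div_mod_mult[OF all_good_I that(2) Uu_notin_I] div_mod_pow[OF all_good_I u] by simp
  have key: "div_mod II (cst r2) P + div_mod II (psu \<alpha>) P + int k2 * div_mod II Uu P =
     div_mod II (cst r1) P + div_mod II (psu \<beta>) P + int k1 * div_mod II Uu P" for P
    using expand[OF r(2) aI, of k2 P] expand[OF r1 bI, of k1 P] AB' by simp
  show ?thesis
  proof (intro exI allI impI)
    fix j assume j: "j < s"
    have pp: "prime_element (p j)" using pprime[OF j] .
    have mq: "minprime (qv (p j))" using minprime_qv[OF fd pp] .
    have X: "[:0,1:] \<notin> qv (p j)" using X_notin_qv[OF pp] .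
    let ?Q = "U.Qof (qv (p j))"
    have u0: "div_mod II Uu ?Q = 0" using div_u_other Qv_props[OF mq X] by blast
    have "div_mod II (cst r2) ?Q = div_mod II (cst r1) ?Q"
      using key[of ?Q] u0 S1[OF mq X] by simp
    then have cr: "div_mod II (cst r2) (K j) = div_mod II (cst r1) (K j)"
      using cst_val[OF j r(2)] cst_val[OF j r1] by simp
    have "div_mod II (psu \<alpha>) (K j) + int k2 * int (a j) = div_mod II (psu \<beta>) (K j) + int k1 * int (a j)"
      using key[of "K j"] cr div_u_K[OF j] by simp
    then show "div_mod II x (K j) - div_mod II y (K j) = (int M + int k1 - int N - int k2) * int (a j)"
      using div_rep[OF x hx, of "K j"] div_rep[OF y hy, of "K j"] div_u_K[OF j]
      by (simp add: algebra_simps)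
  qed
qed

end



lemma W_carrier: "carrier (weil_divisors_mod I) = {D. finite {P. D P \<noteq> 0} \<and> {P. D P \<noteq> 0} \<subseteq> height_one_primes_mod I}"
  unfolding weil_divisors_mod_def by simp
lemma W_mult: "x \<otimes>\<^bsub>weil_divisors_mod I\<^esub> y = (\<lambda>P. x P + y P)"
  unfolding weil_divisors_mod_def by simp
lemma W_one: "\<one>\<^bsub>weil_divisors_mod I\<^esub> = (\<lambda>P. 0)"
  unfolding weil_divisors_mod_def by simp

lemma support_add_sub: "{P. x P + y P \<noteq> (0::int)} \<subseteq> {P. x P \<noteq> 0} \<union> {P. y P \<noteq> 0}"
  by auto

lemma W_group: "comm_group (weil_divisors_mod I)"
proof (rule comm_groupI)
  fix x y assume "x \<in> carrier (weil_divisors_mod I)" "y \<in> carrier (weil_divisors_mod I)"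
  then show "x \<otimes>\<^bsub>weil_divisors_mod I\<^esub> y \<in> carrier (weil_divisors_mod I)"
    unfolding W_carrier W_mult using support_add_sub[of x y] by (auto intro: finite_subset)
next
  show "\<one>\<^bsub>weil_divisors_mod I\<^esub> \<in> carrier (weil_divisors_mod I)" unfolding W_carrier W_one by simp
next
  fix x y z show "x \<otimes>\<^bsub>weil_divisors_mod I\<^esub> y \<otimes>\<^bsub>weil_divisors_mod I\<^esub> z =
    x \<otimes>\<^bsub>weil_divisors_mod I\<^esub> (y \<otimes>\<^bsub>weil_divisors_mod I\<^esub> z)" unfolding W_mult by (simp add: add.assoc)
next
  fix x y show "x \<otimes>\<^bsub>weil_divisors_mod I\<^esub> y = y \<otimes>\<^bsub>weil_divisors_mod I\<^esub> x" unfolding W_mult by (simp add: add.commute)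
next
  fix x show "\<one>\<^bsub>weil_divisors_mod I\<^esub> \<otimes>\<^bsub>weil_divisors_mod I\<^esub> x = x" unfolding W_mult W_one by simp
next
  fix x assume x: "x \<in> carrier (weil_divisors_mod I)"
  have "(\<lambda>P. - x P) \<in> carrier (weil_divisors_mod I)" using x unfolding W_carrier by simp
  moreover have "(\<lambda>P. - x P) \<otimes>\<^bsub>weil_divisors_mod I\<^esub> x = \<one>\<^bsub>weil_divisors_mod I\<^esub>" unfolding W_mult W_one by simp
  ultimately show "\<exists>y\<in>carrier (weil_divisors_mod I). y \<otimes>\<^bsub>weil_divisors_mod I\<^esub> x = \<one>\<^bsub>weil_divisors_mod I\<^esub>" by blast
qed

lemma W_inv: "x \<in> carrier (weil_divisors_mod I) \<Longrightarrow> inv\<^bsub>weil_divisors_mod I\<^esub> x = (\<lambda>P. - x P)"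
proof -
  assume x: "x \<in> carrier (weil_divisors_mod I)"
  interpret G: comm_group "weil_divisors_mod I" by (rule W_group)
  have "(\<lambda>P. - x P) \<in> carrier (weil_divisors_mod I)" using x unfolding W_carrier by simp
  moreover have "(\<lambda>P. - x P) \<otimes>\<^bsub>weil_divisors_mod I\<^esub> x = \<one>\<^bsub>weil_divisors_mod I\<^esub>" unfolding W_mult W_one by simp
  ultimately show ?thesis using G.inv_equality x by blast
qed

lemma Z_carrier: "carrier (Zpow s) = {x. \<forall>i\<ge>s. x i = 0}" unfolding Zpow_def by simp
lemma Z_mult: "x \<otimes>\<^bsub>Zpow s\<^esub> y = (\<lambda>i. x i + y i)" unfolding Zpow_def by simp
lemma Z_one: "\<one>\<^bsub>Zpow s\<^esub> = (\<lambda>i. 0)" unfolding Zpow_def by simp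

lemma Z_group: "comm_group (Zpow s)"
proof (rule comm_groupI)
  fix x y assume "x \<in> carrier (Zpow s)" "y \<in> carrier (Zpow s)"
  then show "x \<otimes>\<^bsub>Zpow s\<^esub> y \<in> carrier (Zpow s)" unfolding Z_carrier Z_mult by simp
next
  show "\<one>\<^bsub>Zpow s\<^esub> \<in> carrier (Zpow s)" unfolding Z_carrier Z_one by simp
next
  fix x y z show "x \<otimes>\<^bsub>Zpow s\<^esub> y \<otimes>\<^bsub>Zpow s\<^esub> z = x \<otimes>\<^bsub>Zpow s\<^esub> (y \<otimes>\<^bsub>Zpow s\<^esub> z)"
    unfolding Z_mult by (simp add: add.assoc)
next
  fix x y show "x \<otimes>\<^bsub>Zpow s\<^esub> y = y \<otimes>\<^bsub>Zpow s\<^esub> x" unfolding Z_mult by (simp add: add.commute)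
next
  fix x show "\<one>\<^bsub>Zpow s\<^esub> \<otimes>\<^bsub>Zpow s\<^esub> x = x" unfolding Z_mult Z_one by simp
next
  fix x assume x: "x \<in> carrier (Zpow s)"
  have "(\<lambda>i. - x i) \<in> carrier (Zpow s)" using x unfolding Z_carrier by simp
  moreover have "(\<lambda>i. - x i) \<otimes>\<^bsub>Zpow s\<^esub> x = \<one>\<^bsub>Zpow s\<^esub>" unfolding Z_mult Z_one by simp
  ultimately show "\<exists>y\<in>carrier (Zpow s). y \<otimes>\<^bsub>Zpow s\<^esub> x = \<one>\<^bsub>Zpow s\<^esub>" by blast
qed

context Xsetup
begin

abbreviation "WW \<equiv> weil_divisors_mod (X_ideal f)"
abbreviation "PP \<equiv> principal_divisors_mod (X_ideal f)"

definition Dx :: "(nat \<Rightarrow> int) \<Rightarrow> 'r poly poly set \<Rightarrow> int" where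
  "Dx x = (\<lambda>P. \<Sum>i<s. if P = K i then x i else 0)"

lemma Dx_K: "j < s \<Longrightarrow> Dx x (K j) = x j"
proof -
  assume j: "j < s"
  have "(\<Sum>i<s. if K j = K i then x i else 0) = (\<Sum>i<s. if i = j then x i else 0)"
    using K_inj j by (intro sum.cong) auto
  also have "\<dots> = x j" using j by simp
  finally show ?thesis unfolding Dx_def .
qed

lemma Dx_other: "(\<forall>i<s. P \<noteq> K i) \<Longrightarrow> Dx x P = 0"
  unfolding Dx_def by simp

lemma Dx_add: "Dx (\<lambda>i. x i + y i) = (\<lambda>P. Dx x P + Dx y P)"
  unfolding Dx_def by (auto simp: sum.distrib[symmetric] intro!: sum.cong)

lemma Dx_carrier: "Dx x \<in> carrier WW"
proof -
  have "{P. Dx x P \<noteq> 0} \<subseteq> K ` {..<s}" using Dx_other by blast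
  moreover have "K ` {..<s} \<subseteq> H1" using K_H1 by blast
  ultimately show ?thesis unfolding W_carrier by (auto intro: finite_subset)
qed

lemma div_diff_carrier:
  assumes "x \<notin> II" "y \<notin> II"
  shows "(\<lambda>P. div_mod II x P - div_mod II y P) \<in> carrier WW"
proof -
  have c: "div_mod II x \<in> carrier WW" "div_mod II y \<in> carrier WW" using div_carrier assms by blast+
  have "{P. div_mod II x P - div_mod II y P \<noteq> 0} \<subseteq> {P. div_mod II x P \<noteq> 0} \<union> {P. div_mod II y P \<noteq> 0}"
    by auto
  then show ?thesis using c unfolding W_carrier by (auto intro: finite_subset)
qed

lemma one_notin: "(1::'r poly poly) \<notin> II" using tc_prime_idealD(4)[OF Iprime] .

lemma div_one: "div_mod II 1 P = 0" using div_mod_one[OF all_good_I] .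

lemma PP_subgroup: "subgroup PP WW"
proof -
  interpret G: comm_group WW by (rule W_group)
  show ?thesis
  proof (rule G.subgroupI)
    show "PP \<subseteq> carrier WW" unfolding principal_divisors_mod_def using div_diff_carrier by blast
    show "PP \<noteq> {}" unfolding principal_divisors_mod_def using one_notin by blast
  next
    fix D assume "D \<in> PP"
    then obtain x y where h: "x \<notin> II" "y \<notin> II" "D = (\<lambda>P. div_mod II x P - div_mod II y P)"
      unfolding principal_divisors_mod_def by blast
    have "inv\<^bsub>WW\<^esub> D = (\<lambda>P. - (div_mod II x P - div_mod II y P))"
      unfolding h(3) by (rule W_inv[OF div_diff_carrier[OF h(1,2)]])
    also have "\<dots> = (\<lambda>P. div_mod II y P - div_mod II x P)" by simp
    finally have "inv\<^bsub>WW\<^esub> D = (\<lambda>P. div_mod II y P - div_mod II x P)" .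
    then show "inv\<^bsub>WW\<^esub> D \<in> PP" unfolding principal_divisors_mod_def using h by blast
  next
    fix D E assume "D \<in> PP" "E \<in> PP"
    then obtain x y x' y' where h: "x \<notin> II" "y \<notin> II" "D = (\<lambda>P. div_mod II x P - div_mod II y P)"
      "x' \<notin> II" "y' \<notin> II" "E = (\<lambda>P. div_mod II x' P - div_mod II y' P)"
      unfolding principal_divisors_mod_def by blast
    have "D \<otimes>\<^bsub>WW\<^esub> E = (\<lambda>P. div_mod II (x * x') P - div_mod II (y * y') P)"
      unfolding W_mult h(3,6) using div_mod_mult[OF all_good_I h(1,4)] div_mod_mult[OF all_good_I h(2,5)]
      by (simp add: algebra_simps)
    moreover have "x * x' \<notin> II" "y * y' \<notin> II" using notin_mult h by blast+
    ultimately show "D \<otimes>\<^bsub>WW\<^esub> E \<in> PP" unfolding principal_divisors_mod_def by blast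
  qed
qed

lemma PP_normal: "PP \<lhd> WW"
  using comm_group.subgroup_imp_normal[OF W_group PP_subgroup] .

lemma decomp:
  "D \<in> carrier WW \<Longrightarrow> \<exists>x y z. x \<notin> II \<and> y \<notin> II \<and> z \<in> carrier (Zpow s) \<and>
     D = (\<lambda>P. (div_mod II x P - div_mod II y P) + Dx z P)"
proof (induction "card {Q. D Q \<noteq> 0 \<and> Uu \<notin> Q}" arbitrary: D rule: less_induct)
  case less
  have Dc: "finite {P. D P \<noteq> 0}" "{P. D P \<noteq> 0} \<subseteq> H1" using less.prems unfolding W_carrier by blast+
  let ?T = "{Q. D Q \<noteq> 0 \<and> Uu \<notin> Q}"
  have Tfin: "finite ?T" using Dc(1) by (rule finite_subset[rotated]) auto
  show ?case
  proof (cases "?T = {}")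
    case True
    define z where "z = (\<lambda>i. if i < s then D (K i) else 0)"
    have zc: "z \<in> carrier (Zpow s)" unfolding Z_carrier z_def by simp
    have "D P = Dx z P" for P
    proof (cases "\<exists>j<s. P = K j")
      case True
      then obtain j where "j < s" "P = K j" by blast
      then show ?thesis using Dx_K z_def by simp
    next
      case False
      have "D P = 0"
      proof (rule ccontr)
        assume "D P \<noteq> 0"
        then have "P \<in> H1" using Dc(2) by blast
        then have "Uu \<notin> P" using classify False by blast
        then show False using \<open>?T = {}\<close> \<open>D P \<noteq> 0\<close> by blast
      qed
      then show ?thesis using Dx_other False by simp
    qed
    then have "D = (\<lambda>P. (div_mod II 1 P - div_mod II 1 P) + Dx z P)" by auto
    then show ?thesis using one_notin zc by blast
  next
    case False
    then obtain Q where Q: "D Q \<noteq> 0" "Uu \<notin> Q" by blast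
    have QH: "Q \<in> H1" using Dc(2) Q(1) by blast
    obtain g where g: "g \<notin> II" "div_mod II g Q = 1"
      "\<And>Q'. Q' \<in> H1 \<Longrightarrow> Uu \<notin> Q' \<Longrightarrow> Q' \<noteq> Q \<Longrightarrow> div_mod II g Q' = 0"
      using gen_at[OF QH Q(2)] by blast
    define k where "k = D Q"
    define gp where "gp = g ^ nat k"
    define gm where "gm = g ^ nat (- k)"
    have gpI: "gp \<notin> II" and gmI: "gm \<notin> II" unfolding gp_def gm_def using div_mod_pow(2)[OF all_good_I g(1)] by blast+
    have dg: "div_mod II gp P - div_mod II gm P = k * div_mod II g P" for P
      unfolding gp_def gm_def using div_mod_pow(1)[OF all_good_I g(1)] by (simp add: algebra_simps)
    define D' where "D' = (\<lambda>P. D P - (div_mod II gp P - div_mod II gm P))"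
    have D'c: "D' \<in> carrier WW"
    proof -
      have "{P. D' P \<noteq> 0} \<subseteq> {P. D P \<noteq> 0} \<union> {P. div_mod II gp P - div_mod II gm P \<noteq> 0}"
        unfolding D'_def by auto
      moreover have "(\<lambda>P. div_mod II gp P - div_mod II gm P) \<in> carrier WW" using div_diff_carrier[OF gpI gmI] .
      ultimately show ?thesis using less.prems unfolding W_carrier by (auto intro: finite_subset)
    qed
    have T': "{Q'. D' Q' \<noteq> 0 \<and> Uu \<notin> Q'} \<subseteq> ?T - {Q}"
    proof
      fix P assume P: "P \<in> {Q'. D' Q' \<noteq> 0 \<and> Uu \<notin> Q'}"
      then have P1: "D' P \<noteq> 0" "Uu \<notin> P" by auto
      show "P \<in> ?T - {Q}"
      proof (cases "P \<in> H1")
        case True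
        show ?thesis
        proof (cases "P = Q")
          case True
          then have "D' P = 0" unfolding D'_def using dg g(2) k_def by simp
          then show ?thesis using P1 by simp
        next
          case False
          then have "div_mod II g P = 0" using g(3) \<open>P \<in> H1\<close> P1(2) by blast
          then have "D' P = D P" unfolding D'_def using dg by simp
          then show ?thesis using P1 False by simp
        qed
      next
        case False
        then have "D' P = D P" unfolding D'_def div_mod_def by simp
        then show ?thesis using P1 False QH by auto
      qed
    qed
    have "card {Q'. D' Q' \<noteq> 0 \<and> Uu \<notin> Q'} \<le> card (?T - {Q})" using T' Tfin by (intro card_mono) auto
    also have "\<dots> < card ?T" using Tfin Q by (intro card_Diff1_less) auto
    finally obtain x y z where h: "x \<notin> II" "y \<notin> II" "z \<in> carrier (Zpow s)"
      "D' = (\<lambda>P. (div_mod II x P - div_mod II y P) + Dx z P)"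
      using less.hyps D'c by blast
    have "D = (\<lambda>P. (div_mod II (x * gp) P - div_mod II (y * gm) P) + Dx z P)"
    proof
      fix P
      have "D P = D' P + (div_mod II gp P - div_mod II gm P)" unfolding D'_def by simp
      also have "\<dots> = (div_mod II (x * gp) P - div_mod II (y * gm) P) + Dx z P"
        using h(4) div_mod_mult[OF all_good_I h(1) gpI] div_mod_mult[OF all_good_I h(2) gmI] by simp
      finally show "D P = (div_mod II (x * gp) P - div_mod II (y * gm) P) + Dx z P" .
    qed
    moreover have "x * gp \<notin> II" "y * gm \<notin> II" using notin_mult h gpI gmI by blast+
    ultimately show ?thesis using h(3) by blast
  qed
qed

lemma div_u_fun: "div_mod II Uu = Dx (\<lambda>i. int (a i))"
proof
  fix P show "div_mod II Uu P = Dx (\<lambda>i. int (a i)) P"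
  proof (cases "\<exists>j<s. P = K j")
    case True
    then obtain j where "j < s" "P = K j" by blast
    then show ?thesis using div_u_K Dx_K by simp
  next
    case False
    then have "Dx (\<lambda>i. int (a i)) P = 0" using Dx_other by blast
    moreover have "div_mod II Uu P = 0"
    proof (cases "P \<in> H1")
      case True then show ?thesis using classify False div_u_other by blast
    qed (simp add: div_mod_def)
    ultimately show ?thesis by simp
  qed
qed

lemma Dx_in_PP:
  assumes z: "z \<in> carrier (Zpow s)"
  shows "Dx z \<in> PP \<longleftrightarrow> z \<in> cyclic_sub s (\<lambda>i. int (a i))"
proof
  assume "z \<in> cyclic_sub s (\<lambda>i. int (a i))"
  then obtain k where k: "z = (\<lambda>i. if i < s then k * int (a i) else 0)" unfolding cyclic_sub_def by blast
  have u: "Uu \<notin> II" using Uu_notin_I[of 1] by simp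
  define up where "up = (Uu::'r poly poly) ^ nat k"
  define um where "um = (Uu::'r poly poly) ^ nat (- k)"
  have upI: "up \<notin> II" and umI: "um \<notin> II" unfolding up_def um_def using div_mod_pow(2)[OF all_good_I u] by blast+
  have "Dx z = (\<lambda>P. div_mod II up P - div_mod II um P)"
  proof
    fix P
    have "div_mod II up P - div_mod II um P = k * div_mod II Uu P"
      unfolding up_def um_def using div_mod_pow(1)[OF all_good_I u] by (simp add: algebra_simps)
    also have "\<dots> = k * Dx (\<lambda>i. int (a i)) P" using div_u_fun by simp
    also have "\<dots> = Dx z P" unfolding Dx_def k by (simp add: sum_distrib_left if_distrib cong: if_cong)
    finally show "Dx z P = div_mod II up P - div_mod II um P" by simp
  qed
  then show "Dx z \<in> PP" unfolding principal_divisors_mod_def using upI umI by blast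
next
  assume "Dx z \<in> PP"
  then obtain x y where h: "x \<notin> II" "y \<notin> II" "Dx z = (\<lambda>P. div_mod II x P - div_mod II y P)"
    unfolding principal_divisors_mod_def by blast
  have "\<forall>Q\<in>H1. Uu \<notin> Q \<longrightarrow> div_mod II x Q = div_mod II y Q"
  proof (intro ballI impI)
    fix Q assume "Q \<in> H1" "Uu \<notin> Q"
    then have "\<forall>i<s. Q \<noteq> K i" using K_u by blast
    then have "Dx z Q = 0" by (rule Dx_other)
    then show "div_mod II x Q = div_mod II y Q" using h(3) by (metis eq_iff_diff_eq_0)
  qed
  then obtain k where k: "\<forall>j<s. div_mod II x (K j) - div_mod II y (K j) = k * int (a j)"
    using compare[OF h(1,2)] by blast
  have "z = (\<lambda>i. if i < s then k * int (a i) else 0)"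
  proof
    fix i show "z i = (if i < s then k * int (a i) else 0)"
    proof (cases "i < s")
      case True
      then have "z i = Dx z (K i)" using Dx_K by simp
      also have "\<dots> = k * int (a i)" using h(3) k True by simp
      finally show ?thesis using True by simp
    next
      case False then show ?thesis using z unfolding Z_carrier by simp
    qed
  qed
  then show "z \<in> cyclic_sub s (\<lambda>i. int (a i))" unfolding cyclic_sub_def by blast
qed

definition Phi :: "(nat \<Rightarrow> int) \<Rightarrow> ('r poly poly set \<Rightarrow> int) set" where
  "Phi z = PP #>\<^bsub>WW\<^esub> Dx z"

lemma Phi_hom: "group_hom (Zpow s) (WW Mod PP) Phi"
proof -
  interpret G: comm_group WW by (rule W_group)
  interpret N: normal PP WW by (rule PP_normal)
  interpret Z: comm_group "Zpow s" by (rule Z_group)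
  have gq: "group (WW Mod PP)" by (rule N.factorgroup_is_group)
  have "Phi \<in> hom (Zpow s) (WW Mod PP)"
  proof (rule homI)
    fix z assume "z \<in> carrier (Zpow s)"
    show "Phi z \<in> carrier (WW Mod PP)" unfolding Phi_def FactGroup_def
      using G.rcosetsI[OF N.subset Dx_carrier] by simp
  next
    fix x y assume "x \<in> carrier (Zpow s)" "y \<in> carrier (Zpow s)"
    have "Phi (x \<otimes>\<^bsub>Zpow s\<^esub> y) = PP #>\<^bsub>WW\<^esub> (Dx x \<otimes>\<^bsub>WW\<^esub> Dx y)"
      unfolding Phi_def Z_mult W_mult Dx_add ..
    also have "\<dots> = (PP #>\<^bsub>WW\<^esub> Dx x) <#>\<^bsub>WW\<^esub> (PP #>\<^bsub>WW\<^esub> Dx y)"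
      using N.rcos_sum[OF Dx_carrier Dx_carrier] by simp
    finally show "Phi (x \<otimes>\<^bsub>Zpow s\<^esub> y) = Phi x \<otimes>\<^bsub>WW Mod PP\<^esub> Phi y"
      unfolding Phi_def by simp
  qed
  then show ?thesis unfolding group_hom_def group_hom_axioms_def using Z.is_group gq by blast
qed

lemma Phi_surj: "Phi ` carrier (Zpow s) = carrier (WW Mod PP)"
proof
  interpret G: comm_group WW by (rule W_group)
  interpret N: normal PP WW by (rule PP_normal)
  show "Phi ` carrier (Zpow s) \<subseteq> carrier (WW Mod PP)"
    using group_hom.hom_closed[OF Phi_hom] by blast
  show "carrier (WW Mod PP) \<subseteq> Phi ` carrier (Zpow s)"
  proof
    fix C assume "C \<in> carrier (WW Mod PP)"
    then obtain D where D: "D \<in> carrier WW" "C = PP #>\<^bsub>WW\<^esub> D" unfolding FactGroup_def RCOSETS_def by auto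
    obtain x y z where h: "x \<notin> II" "y \<notin> II" "z \<in> carrier (Zpow s)"
      "D = (\<lambda>P. (div_mod II x P - div_mod II y P) + Dx z P)" using decomp[OF D(1)] by blast
    let ?h = "\<lambda>P. div_mod II x P - div_mod II y P"
    have hP: "?h \<in> PP" unfolding principal_divisors_mod_def using h(1,2) by blast
    have hc: "?h \<in> carrier WW" using div_diff_carrier[OF h(1,2)] .
    have "D = ?h \<otimes>\<^bsub>WW\<^esub> Dx z" unfolding W_mult h(4) ..
    then have "PP #>\<^bsub>WW\<^esub> D = (PP #>\<^bsub>WW\<^esub> ?h) #>\<^bsub>WW\<^esub> Dx z"
      using G.coset_mult_assoc[OF N.subset hc Dx_carrier] by simp
    also have "PP #>\<^bsub>WW\<^esub> ?h = PP" using N.rcos_const[OF G.is_group hP] .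
    finally have "C = Phi z" using D(2) unfolding Phi_def by simp
    then show "C \<in> Phi ` carrier (Zpow s)" using h(3) by blast
  qed
qed

lemma Phi_kernel: "kernel (Zpow s) (WW Mod PP) Phi = cyclic_sub s (\<lambda>i. int (a i))"
proof -
  interpret G: comm_group WW by (rule W_group)
  interpret N: normal PP WW by (rule PP_normal)
  have "Phi z = PP \<longleftrightarrow> Dx z \<in> PP" for z
  proof
    assume "Phi z = PP"
    then show "Dx z \<in> PP" using G.rcos_self[OF Dx_carrier[of z] N.subgroup_axioms] unfolding Phi_def by simp
  next
    assume "Dx z \<in> PP"
    then show "Phi z = PP" unfolding Phi_def using N.rcos_const[OF G.is_group] by blast
  qed
  moreover have "cyclic_sub s (\<lambda>i. int (a i)) \<subseteq> carrier (Zpow s)" unfolding cyclic_sub_def Z_carrier by auto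
  ultimately show ?thesis unfolding kernel_def using Dx_in_PP by auto
qed

theorem class_group_iso: "class_group_mod (X_ideal f) \<cong> Zpow s Mod cyclic_sub s (\<lambda>i. int (a i))"
proof -
  have "Zpow s Mod kernel (Zpow s) (WW Mod PP) Phi \<cong> WW Mod PP"
    using group_hom.FactGroup_iso[OF Phi_hom Phi_surj] .
  then have i: "Zpow s Mod cyclic_sub s (\<lambda>i. int (a i)) \<cong> WW Mod PP" unfolding Phi_kernel .
  have "group (Zpow s Mod kernel (Zpow s) (WW Mod PP) Phi)"
    using normal.factorgroup_is_group[OF group_hom.normal_kernel[OF Phi_hom]] .
  then have "group (Zpow s Mod cyclic_sub s (\<lambda>i. int (a i)))" unfolding Phi_kernel .
  then have "WW Mod PP \<cong> Zpow s Mod cyclic_sub s (\<lambda>i. int (a i))" using group.iso_sym i by blast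
  then show ?thesis unfolding class_group_mod_def .
qed

end


theorem corollary4p4:
  fixes \<phi> :: "'k::field_char_0 \<Rightarrow> 'r::idom"
    and f :: 'r and s :: nat and p :: "nat \<Rightarrow> 'r" and a :: "nat \<Rightarrow> nat"
  assumes "alg_closed_field TYPE('k)"
    and "finitely_generated_algebra \<phi>"
    and "factorial_domain TYPE('r)"
    and "f \<notin> range \<phi>"
    and "\<And>i. i < s \<Longrightarrow> prime_element (p i)"
    and "\<And>i j. i < s \<Longrightarrow> j < s \<Longrightarrow> i \<noteq> j \<Longrightarrow> \<not> (p i dvd p j \<and> p j dvd p i)"
    and "\<And>i. i < s \<Longrightarrow> a i > 0"
    and "f = (\<Prod>i<s. p i ^ a i)"
  shows "class_group_mod (X_ideal f) \<cong> Zpow s Mod cyclic_sub s (\<lambda>i. int (a i))"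
proof -
  interpret X: Xsetup f s p a
    by (rule Xsetup.intro) (use assms(3,5,6,7,8) in blast)+
  show ?thesis by (rule X.class_group_iso)
qed

end
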